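(* (i) For every $t>0$, $$\lim_{\epsilon\to0}\int_0^t\!\int_{\mathbb R}\big[R_\epsilon(s,x)-G(s,x)\big]^2\,dx\,ds=0.$$ (ii) There is a finite constant $C_{a,\delta}\ge0$ such that for all $\epsilon>0$ and $t>0$, $$\int_{\mathbb R}R_\epsilon(t,x)^2\,dx\le C_{a,\delta}\,t^{-1/a}.$$
   Context: Fix $a\in(1,2]$ and $\delta\in\mathbb R$ with $|\delta|\le 2-a$. Let $G(t,x):=\frac{1}{2\pi}\int_{\mathbb R}\exp\{i\xi x - t|\xi|^a e^{-i\delta\pi\,\mathrm{sgn}(\xi)/2}\}\,d\xi$ for $t>0$, $x\in\mathbb R$ (the density of a strictly $a$-stable law). For $\epsilon>0$, $t>0$, $x\in\mathbb R$ define $$R_\epsilon(t,x):=e^{-t/\epsilon}\sum_{n=1}^\infty\frac{(t/\epsilon)^n}{n!}\,G(n\epsilon,x).$$ *)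

theory Defs
  imports "HOL-Analysis.Analysis"
begin

text \<open>Density of the strictly a-stable law, via its Fourier inversion integral
  (a Lebesgue/Bochner integral of a complex-valued integrable function); the
  integral is real-valued, we take its real part to obtain a real function.\<close>
definition stableG :: "real \<Rightarrow> real \<Rightarrow> real \<Rightarrow> real \<Rightarrow> real" where
  "stableG a \<delta> t x = Re ((1 / (2 * pi)) *
     integral\<^sup>L lborel (\<lambda>\<xi>::real. exp (\<i> * complex_of_real (\<xi> * x)
        - complex_of_real (t * \<bar>\<xi>\<bar> powr a)
          * exp (- \<i> * complex_of_real (\<delta> * pi * sgn \<xi> / 2)))))"

definition stableR :: "real \<Rightarrow> real \<Rightarrow> real \<Rightarrow> real \<Rightarrow> real \<Rightarrow> real" where
  "stableR a \<delta> \<epsilon> t x = exp (- t / \<epsilon>) *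
     (\<Sum>n. (t / \<epsilon>) ^ Suc n / fact (Suc n) * stableG a \<delta> (real (Suc n) * \<epsilon>) x)"

end

theory Submission
  imports Defs "HOL-Probability.Sinc_Integral" "HOL-Real_Asymp.Real_Asymp"
begin


locale stab =
  fixes a \<delta> :: real
  assumes a1: "1 < a" and a2: "a \<le> 2" and dl: "\<bar>\<delta>\<bar> \<le> 2 - a"
begin

definition c0 :: real where "c0 = cos (\<delta> * pi / 2)"

lemma c0_pos: "0 < c0"
proof -
  have "\<delta> < 1" "-1 < \<delta>" using a1 dl by linarith+
  have "\<delta> * pi < 1 * pi" using pi_gt_zero \<open>\<delta> < 1\<close> by (intro mult_strict_right_mono) auto
  moreover have "-1 * pi < \<delta> * pi" using pi_gt_zero \<open>-1 < \<delta>\<close> by (intro mult_strict_right_mono) auto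
  ultimately show ?thesis unfolding c0_def by (intro cos_gt_zero_pi) auto
qed

lemma c0_le1: "c0 \<le> 1" unfolding c0_def by simp

definition ff :: "real \<Rightarrow> real \<Rightarrow> real \<Rightarrow> complex" where
  "ff u x \<xi> = exp (\<i> * complex_of_real (\<xi> * x)
        - complex_of_real (u * \<bar>\<xi>\<bar> powr a)
          * exp (- \<i> * complex_of_real (\<delta> * pi * sgn \<xi> / 2)))"

lemma G_eq: "stableG a \<delta> u x = Re (1 / (2 * pi) * integral\<^sup>L lborel (ff u x))"
  unfolding stableG_def ff_def by simp

lemma ff_meas[measurable]: "ff u x \<in> borel_measurable borel"
  unfolding ff_def by measurable

lemma cos_sgn_ge: "cos (\<delta> * pi * sgn \<xi> / 2) \<ge> c0"
  unfolding c0_def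
  by (cases "\<xi> > 0"; cases "\<xi> < 0") (auto simp: c0_le1[unfolded c0_def])

lemma norm_ff: assumes "u \<ge> 0" shows "norm (ff u x \<xi>) \<le> exp (- c0 * u * \<bar>\<xi>\<bar> powr a)"
proof -
  have "norm (ff u x \<xi>) = exp (- (u * \<bar>\<xi>\<bar> powr a) * cos (\<delta> * pi * sgn \<xi> / 2))"
    unfolding ff_def norm_exp_eq_Re by (simp add: Re_exp)
  also have "\<dots> \<le> exp (- c0 * u * \<bar>\<xi>\<bar> powr a)"
  proof -
    have "c0 * (u * \<bar>\<xi>\<bar> powr a) \<le> cos (\<delta> * pi * sgn \<xi> / 2) * (u * \<bar>\<xi>\<bar> powr a)"
      using cos_sgn_ge[of \<xi>] assms by (intro mult_right_mono) auto
    thus ?thesis by (simp add: algebra_simps)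
  qed
  finally show ?thesis .
qed

end



lemma exp_quartic: fixes z :: real assumes "z \<ge> 0" shows "z^4 / 64 \<le> exp z"
proof -
  have "1 + z/2 + (z/2)^2/2 \<le> exp (z/2)" using assms exp_lower_Taylor_quadratic[of "z/2"] by simp
  hence h: "z^2/8 \<le> exp (z/2)" using assms by (simp add: power2_eq_square)
  have "(z^2/8)^2 \<le> (exp (z/2))^2" using h assms by (intro power_mono) auto
  also have "(exp (z/2))^2 = exp z" by (simp add: power2_eq_square flip: exp_add)
  finally show ?thesis by (simp add: power_def field_simps)
qed

lemma integrable_inv1sq: "integrable lborel (\<lambda>x::real. inverse (1 + x^2))"
  using integrable_inverse_1_plus_square by (simp add: set_integrable_def)

lemma nn_inv1sq_fin: "(\<integral>\<^sup>+x. ennreal (inverse (1 + x^2)) \<partial>lborel) < \<infinity>"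
proof -
  from integrable_inv1sq have "(\<integral>\<^sup>+x. ennreal (norm (inverse (1 + (x::real)^2))) \<partial>lborel) < \<infinity>"
    unfolding integrable_iff_bounded by blast
  moreover have "\<And>x::real. norm (inverse (1 + x^2)) = inverse (1 + x^2)"
    by (simp add: add_nonneg_eq_0_iff)
  ultimately show ?thesis by simp
qed

context stab
begin

lemma dom_bound:
  assumes c: "c > 0" and p: "0 \<le> p" "p \<le> 2"
  shows "\<bar>\<eta>\<bar> powr p * exp (- c * \<bar>\<eta>\<bar> powr a) \<le> (2 + 128 / c^4) * inverse (1 + \<eta>^2)"
proof (cases "\<bar>\<eta>\<bar> \<le> 1")
  case True
  have "\<bar>\<eta>\<bar> powr p \<le> 1"
  proof (cases "\<eta> = 0")
    case False
    hence "\<bar>\<eta>\<bar> powr p \<le> 1 powr p" using True p by (intro powr_mono2) auto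
    thus ?thesis by simp
  qed simp
  moreover have "exp (- c * \<bar>\<eta>\<bar> powr a) \<le> 1" using c by simp
  ultimately have "\<bar>\<eta>\<bar> powr p * exp (- c * \<bar>\<eta>\<bar> powr a) \<le> 1"
    by (simp add: mult_le_one)
  also have "1 \<le> 2 * inverse (1 + \<eta>^2)"
  proof -
    have "\<eta>^2 \<le> 1" using True by (simp add: abs_square_le_1)
    moreover have "1 + \<eta>^2 > 0" by (simp add: add_pos_nonneg)
    ultimately show ?thesis by (simp add: field_simps)
  qed
  also have "\<dots> \<le> (2 + 128 / c^4) * inverse (1 + \<eta>^2)"
    using c by (intro mult_right_mono) auto
  finally show ?thesis .
next
  case False
  define y where "y = \<bar>\<eta>\<bar>"
  have y1: "y > 1" using False y_def by simp
  have "y powr 1 \<le> y powr a" using y1 a1 by (intro powr_mono) auto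
  hence ya: "y \<le> y powr a" using y1 by simp
  have "y powr p \<le> y powr 2" using y1 p by (intro powr_mono) auto
  hence yp: "y powr p \<le> y^2" using y1 by (simp add: powr_realpow)
  have e1: "exp (- c * y powr a) \<le> exp (- c * y)" using ya c by simp
  have "(c*y)^4/64 \<le> exp (c*y)" using c y1 by (intro exp_quartic) auto
  hence e2: "exp (- c * y) \<le> 64 / (c*y)^4"
    using c y1 by (simp add: exp_minus field_simps)
  have "y powr p * exp (- c * y powr a) \<le> y^2 * (64 / (c*y)^4)"
  proof -
    have "exp (- c * y powr a) \<le> 64 / (c*y)^4" using e1 e2 by linarith
    thus ?thesis using yp by (intro mult_mono) auto
  qed
  also have "\<dots> = 64 / (c^4 * y^2)" using y1 c by (simp add: field_simps power_def)
  also have "\<dots> \<le> 128 / c^4 * inverse (1 + y^2)"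
  proof -
    have "1 \<le> y^2" using y1 by (intro one_le_power) auto
    hence "inverse (2*y^2) \<le> inverse (1+y^2)"
      by (intro le_imp_inverse_le) (auto simp: add_pos_nonneg)
    hence "128 / c^4 * inverse (2*y^2) \<le> 128 / c^4 * inverse (1+y^2)"
      using c by (intro mult_left_mono) auto
    moreover have "64 / (c^4 * y^2) = 128 / c^4 * inverse (2*y^2)" using c y1 by (simp add: field_simps)
    ultimately show ?thesis by simp
  qed
  also have "\<dots> \<le> (2 + 128 / c^4) * inverse (1 + y^2)"
    by (intro mult_right_mono) auto
  finally show ?thesis by (simp add: y_def)
qed

lemma dom_bound0:
  assumes c: "c > 0"
  shows "exp (- c * \<bar>\<eta>\<bar> powr a) \<le> (2 + 128 / c^4) * inverse (1 + \<eta>^2)"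
proof (cases "\<eta> = 0")
  case True thus ?thesis using c by simp
next
  case False
  thus ?thesis using dom_bound[OF c, of 0 \<eta>] by simp
qed

lemma J_fin:
  assumes c: "c > 0" and p: "0 \<le> p" "p \<le> 2"
  shows "(\<integral>\<^sup>+\<eta>. ennreal (\<bar>\<eta>\<bar> powr p * exp (- c * \<bar>\<eta>\<bar> powr a)) \<partial>lborel) < \<infinity>"
proof -
  have "(\<integral>\<^sup>+\<eta>. ennreal (\<bar>\<eta>\<bar> powr p * exp (- c * \<bar>\<eta>\<bar> powr a)) \<partial>lborel)
     \<le> (\<integral>\<^sup>+\<eta>. ennreal (2 + 128 / c^4) * ennreal (inverse (1 + \<eta>^2)) \<partial>lborel)"
  proof (intro nn_integral_mono)
    fix \<eta> :: real
    have "1 + \<eta>^2 > 0" by (simp add: add_pos_nonneg)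
    hence "ennreal (2 + 128 / c^4) * ennreal (inverse (1 + \<eta>^2)) = ennreal ((2 + 128 / c^4) * inverse (1 + \<eta>^2))"
      using c by (intro ennreal_mult[symmetric]) auto
    thus "ennreal (\<bar>\<eta>\<bar> powr p * exp (- c * \<bar>\<eta>\<bar> powr a)) \<le> ennreal (2 + 128 / c^4) * ennreal (inverse (1 + \<eta>^2))"
      using dom_bound[OF assms] by (simp add: ennreal_leI)
  qed
  also have "\<dots> = ennreal (2 + 128 / c^4) * (\<integral>\<^sup>+\<eta>. ennreal (inverse (1 + \<eta>^2)) \<partial>lborel)"
    by (intro nn_integral_cmult) auto
  also have "\<dots> < \<infinity>" using nn_inv1sq_fin by (simp add: ennreal_mult_less_top)
  finally show ?thesis .
qed

lemma J0_fin:
  assumes c: "c > 0"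
  shows "(\<integral>\<^sup>+\<eta>. ennreal (exp (- c * \<bar>\<eta>\<bar> powr a)) \<partial>lborel) < \<infinity>"
proof -
  have "(\<integral>\<^sup>+\<eta>. ennreal (exp (- c * \<bar>\<eta>\<bar> powr a)) \<partial>lborel)
     \<le> (\<integral>\<^sup>+\<eta>. ennreal (2 + 128 / c^4) * ennreal (inverse (1 + \<eta>^2)) \<partial>lborel)"
  proof (intro nn_integral_mono)
    fix \<eta> :: real
    have "1 + \<eta>^2 > 0" by (simp add: add_pos_nonneg)
    hence "ennreal (2 + 128 / c^4) * ennreal (inverse (1 + \<eta>^2)) = ennreal ((2 + 128 / c^4) * inverse (1 + \<eta>^2))"
      using c by (intro ennreal_mult[symmetric]) auto
    thus "ennreal (exp (- c * \<bar>\<eta>\<bar> powr a)) \<le> ennreal (2 + 128 / c^4) * ennreal (inverse (1 + \<eta>^2))"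
      using dom_bound0[OF assms] by (simp add: ennreal_leI)
  qed
  also have "\<dots> = ennreal (2 + 128 / c^4) * (\<integral>\<^sup>+\<eta>. ennreal (inverse (1 + \<eta>^2)) \<partial>lborel)"
    by (intro nn_integral_cmult) auto
  also have "\<dots> < \<infinity>" using nn_inv1sq_fin by (simp add: ennreal_mult_less_top)
  finally show ?thesis .
qed

lemma scale_p:
  assumes c: "c > 0" and u: "u > 0" and p: "p \<ge> 0"
  shows "(\<integral>\<^sup>+\<xi>. ennreal (\<bar>\<xi>\<bar> powr p * exp (- c * u * \<bar>\<xi>\<bar> powr a)) \<partial>lborel)
       = ennreal (u powr (-(p+1)/a)) * (\<integral>\<^sup>+\<eta>. ennreal (\<bar>\<eta>\<bar> powr p * exp (- c * \<bar>\<eta>\<bar> powr a)) \<partial>lborel)"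
proof -
  define k where "k = u powr (-1/a)"
  have k: "k > 0" using u by (simp add: k_def)
  have ka: "u * k powr a = 1" using u a1 by (simp add: k_def powr_powr flip: powr_add)
  have kp: "k * k powr p = u powr (-(p+1)/a)"
    using u a1 k by (simp add: k_def powr_powr field_simps flip: powr_add powr_mult)
  have "(\<integral>\<^sup>+\<xi>. ennreal (\<bar>\<xi>\<bar> powr p * exp (- c * u * \<bar>\<xi>\<bar> powr a)) \<partial>lborel)
    = ennreal \<bar>k\<bar> * (\<integral>\<^sup>+\<eta>. ennreal (\<bar>0 + k * \<eta>\<bar> powr p * exp (- c * u * \<bar>0 + k * \<eta>\<bar> powr a)) \<partial>lborel)"
    using k by (intro nn_integral_real_affine) auto
  also have "(\<lambda>\<eta>. ennreal (\<bar>0 + k * \<eta>\<bar> powr p * exp (- c * u * \<bar>0 + k * \<eta>\<bar> powr a)))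
        = (\<lambda>\<eta>. ennreal (k powr p) * ennreal (\<bar>\<eta>\<bar> powr p * exp (- c * \<bar>\<eta>\<bar> powr a)))"
  proof
    fix \<eta>
    have "\<bar>0 + k * \<eta>\<bar> powr p = k powr p * \<bar>\<eta>\<bar> powr p" using k by (simp add: abs_mult powr_mult)
    moreover have "u * \<bar>0 + k * \<eta>\<bar> powr a = \<bar>\<eta>\<bar> powr a"
      using k ka by (simp add: abs_mult powr_mult mult.assoc[symmetric])
    ultimately show "ennreal (\<bar>0 + k * \<eta>\<bar> powr p * exp (- c * u * \<bar>0 + k * \<eta>\<bar> powr a))
        = ennreal (k powr p) * ennreal (\<bar>\<eta>\<bar> powr p * exp (- c * \<bar>\<eta>\<bar> powr a))"
      by (simp add: ennreal_mult'[symmetric] mult.assoc)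
  qed
  also have "(\<integral>\<^sup>+\<eta>. ennreal (k powr p) * ennreal (\<bar>\<eta>\<bar> powr p * exp (- c * \<bar>\<eta>\<bar> powr a)) \<partial>lborel)
     = ennreal (k powr p) * (\<integral>\<^sup>+\<eta>. ennreal (\<bar>\<eta>\<bar> powr p * exp (- c * \<bar>\<eta>\<bar> powr a)) \<partial>lborel)"
    by (intro nn_integral_cmult) auto
  finally show ?thesis using k kp by (simp add: mult.assoc[symmetric] ennreal_mult'[symmetric])
qed

lemma scale_0:
  assumes c: "c > 0" and u: "u > 0"
  shows "(\<integral>\<^sup>+\<xi>. ennreal (exp (- c * u * \<bar>\<xi>\<bar> powr a)) \<partial>lborel)
       = ennreal (u powr (-1/a)) * (\<integral>\<^sup>+\<eta>. ennreal (exp (- c * \<bar>\<eta>\<bar> powr a)) \<partial>lborel)"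
proof -
  define k where "k = u powr (-1/a)"
  have k: "k > 0" using u by (simp add: k_def)
  have ka: "u * k powr a = 1" using u a1 by (simp add: k_def powr_powr flip: powr_add)
  have "(\<integral>\<^sup>+\<xi>. ennreal (exp (- c * u * \<bar>\<xi>\<bar> powr a)) \<partial>lborel)
    = ennreal \<bar>k\<bar> * (\<integral>\<^sup>+\<eta>. ennreal (exp (- c * u * \<bar>0 + k * \<eta>\<bar> powr a)) \<partial>lborel)"
    using k by (intro nn_integral_real_affine) auto
  also have "(\<lambda>\<eta>. ennreal (exp (- c * u * \<bar>0 + k * \<eta>\<bar> powr a)))
        = (\<lambda>\<eta>. ennreal (exp (- c * \<bar>\<eta>\<bar> powr a)))"
  proof
    fix \<eta>
    have "u * \<bar>0 + k * \<eta>\<bar> powr a = \<bar>\<eta>\<bar> powr a"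
      using k ka by (simp add: abs_mult powr_mult mult.assoc[symmetric])
    thus "ennreal (exp (- c * u * \<bar>0 + k * \<eta>\<bar> powr a)) = ennreal (exp (- c * \<bar>\<eta>\<bar> powr a))"
      by (simp add: mult.assoc)
  qed
  finally show ?thesis using k by (simp add: k_def)
qed

end



lemma exp_sub_one_bound:
  fixes w :: complex assumes "Re w \<le> 0"
  shows "norm (exp w - 1) \<le> 2 * norm w"
proof -
  define e where "e = exp (\<i> * complex_of_real (Im w))"
  have ew: "exp w = complex_of_real (exp (Re w)) * e"
    unfolding e_def by (subst complex_eq[of w]) (simp add: exp_add exp_of_real)
  have ne: "norm e = 1" unfolding e_def by simp
  have "norm (exp w - 1) \<le> norm (exp w - e) + norm (e - 1)"
    using norm_triangle_ineq[of "exp w - e" "e - 1"] by simp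
  also have "exp w - e = complex_of_real (exp (Re w) - 1) * e" by (simp add: ew algebra_simps)
  hence "norm (exp w - e) = \<bar>exp (Re w) - 1\<bar>"
    by (simp only: norm_mult ne norm_of_real mult_1_right)
  also have "\<bar>exp (Re w) - 1\<bar> \<le> \<bar>Re w\<bar>"
  proof -
    have "exp (Re w) \<le> 1" using assms by simp
    thus ?thesis using exp_ge_add_one_self[of "Re w"] assms by linarith
  qed
  also have "norm (e - 1) = 2 * \<bar>sin (Im w / 2)\<bar>" unfolding e_def by (rule dist_exp_i_1)
  also have "\<dots> \<le> \<bar>Im w\<bar>" using abs_sin_x_le_abs_x[of "Im w / 2"] by simp
  also have "\<bar>Re w\<bar> + \<bar>Im w\<bar> \<le> 2 * norm w"
    using abs_Re_le_cmod[of w] abs_Im_le_cmod[of w] by simp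
  finally show ?thesis by simp
qed

context stab
begin

definition J0 where "J0 = (\<integral>\<^sup>+\<eta>. ennreal (exp (- c0 * \<bar>\<eta>\<bar> powr a)) \<partial>lborel)"
definition JJ where "JJ p = (\<integral>\<^sup>+\<eta>. ennreal (\<bar>\<eta>\<bar> powr p * exp (- c0 * \<bar>\<eta>\<bar> powr a)) \<partial>lborel)"

lemma J0_fin': "J0 < \<infinity>" unfolding J0_def using J0_fin[OF c0_pos] .
lemma JJ_fin: "0 \<le> p \<Longrightarrow> p \<le> 2 \<Longrightarrow> JJ p < \<infinity>" unfolding JJ_def using J_fin[OF c0_pos] by blast

lemma intg0: assumes "u > 0" shows "integrable lborel (\<lambda>\<xi>. exp (- c0 * u * \<bar>\<xi>\<bar> powr a))"
proof -
  have "(\<integral>\<^sup>+\<xi>. ennreal (norm (exp (- c0 * u * \<bar>\<xi>\<bar> powr a))) \<partial>lborel) < \<infinity>"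
    using scale_0[OF c0_pos assms] J0_fin' by (simp add: J0_def ennreal_mult_less_top)
  thus ?thesis by (simp add: integrable_iff_bounded)
qed

lemma intgp: assumes "u > 0" "0 \<le> p" "p \<le> 2"
  shows "integrable lborel (\<lambda>\<xi>. \<bar>\<xi>\<bar> powr p * exp (- c0 * u * \<bar>\<xi>\<bar> powr a))"
proof -
  have "(\<integral>\<^sup>+\<xi>. ennreal (norm (\<bar>\<xi>\<bar> powr p * exp (- c0 * u * \<bar>\<xi>\<bar> powr a))) \<partial>lborel) < \<infinity>"
    using scale_p[OF c0_pos assms(1,2)] JJ_fin[OF assms(2,3)] by (simp add: JJ_def ennreal_mult_less_top)
  thus ?thesis by (simp add: integrable_iff_bounded)
qed

lemma integrable_ff: assumes "u > 0" shows "integrable lborel (ff u x)"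
  by (rule Bochner_Integration.integrable_bound[OF intg0[OF assms]]) (use norm_ff assms in auto)

definition K1 where "K1 = enn2real J0 / (2 * pi)"

lemma K1_nonneg: "K1 \<ge> 0" unfolding K1_def by simp

lemma G_bound1: assumes "u > 0" shows "\<bar>stableG a \<delta> u x\<bar> \<le> K1 * u powr (-1/a)"
proof -
  have "ennreal (norm (integral\<^sup>L lborel (ff u x))) \<le> (\<integral>\<^sup>+\<xi>. ennreal (norm (ff u x \<xi>)) \<partial>lborel)"
    by (rule integral_norm_bound_ennreal[OF integrable_ff[OF assms]])
  also have "\<dots> \<le> (\<integral>\<^sup>+\<xi>. ennreal (exp (- c0 * u * \<bar>\<xi>\<bar> powr a)) \<partial>lborel)"
    using norm_ff assms by (intro nn_integral_mono) (simp add: ennreal_leI)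
  also have "\<dots> = ennreal (u powr (-1/a)) * J0" unfolding J0_def by (rule scale_0[OF c0_pos assms])
  also have "\<dots> = ennreal (u powr (-1/a) * enn2real J0)"
    using J0_fin' by (simp add: ennreal_mult'' ennreal_enn2real_if)
  finally have "norm (integral\<^sup>L lborel (ff u x)) \<le> u powr (-1/a) * enn2real J0"
    by (subst (asm) ennreal_le_iff) auto
  moreover have "norm (1 / (2 * pi) * integral\<^sup>L lborel (ff u x)) = norm (integral\<^sup>L lborel (ff u x)) / (2*pi)"
    by (simp add: norm_mult norm_divide)
  ultimately have "norm (1 / (2 * pi) * integral\<^sup>L lborel (ff u x)) \<le> K1 * u powr (-1/a)"
    by (simp add: K1_def field_simps divide_right_mono)
  thus ?thesis unfolding G_eq using abs_Re_le_cmod order_trans by blast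
qed

lemma ff_diff:
  assumes "u > 0" "s > 0"
  shows "norm (ff u x \<xi> - ff s x \<xi>) \<le> 2 * \<bar>u - s\<bar> * (\<bar>\<xi>\<bar> powr a * exp (- c0 * min u s * \<bar>\<xi>\<bar> powr a))"
proof -
  define k where "k = exp (- \<i> * complex_of_real (\<delta> * pi * sgn \<xi> / 2))"
  define r where "r = \<bar>\<xi>\<bar> powr a"
  define Z where "Z = complex_of_real r * k"
  define E where "E = exp (\<i> * complex_of_real (\<xi> * x))"
  have r0: "r \<ge> 0" unfolding r_def by simp
  have nk: "norm k = 1" unfolding k_def by simp
  have ReZ: "Re Z = r * cos (\<delta> * pi * sgn \<xi> / 2)" unfolding Z_def k_def by (simp add: Re_exp)
  have ReZ0: "Re Z \<ge> c0 * r" unfolding ReZ using cos_sgn_ge[of \<xi>] r0 by (simp add: mult.commute mult_left_mono)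
  have nZ: "norm Z = r" unfolding Z_def using nk r0 by (simp add: norm_mult)
  have ffe: "ff v x \<xi> = E * exp (- complex_of_real v * Z)" for v
  proof -
    have "ff v x \<xi> = exp (\<i> * complex_of_real (\<xi> * x) + (- complex_of_real v * Z))"
      unfolding ff_def Z_def k_def r_def by (simp add: algebra_simps)
    thus ?thesis by (simp only: exp_add E_def)
  qed
  define m where "m = min u s"
  define d where "d = \<bar>u - s\<bar>"
  have key: "norm (exp (- complex_of_real u * Z) - exp (- complex_of_real s * Z))
        = norm (exp (- complex_of_real m * Z)) * norm (exp (- complex_of_real d * Z) - 1)"
  proof (cases "u \<le> s")
    case True
    have "exp (- complex_of_real u * Z) - exp (- complex_of_real s * Z)
       = - (exp (- complex_of_real m * Z) * (exp (- complex_of_real d * Z) - 1))"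
      using True by (simp add: m_def d_def algebra_simps flip: exp_add)
    thus ?thesis by (simp only: norm_minus_cancel norm_mult)
  next
    case False
    have "exp (- complex_of_real u * Z) - exp (- complex_of_real s * Z)
       = exp (- complex_of_real m * Z) * (exp (- complex_of_real d * Z) - 1)"
      using False by (simp add: m_def d_def algebra_simps flip: exp_add)
    thus ?thesis by (simp only: norm_mult)
  qed
  have d0: "d \<ge> 0" unfolding d_def by simp
  have m0: "m > 0" unfolding m_def using assms by simp
  have ReZ1: "Re Z \<ge> 0" using ReZ0 c0_pos r0 by (meson mult_nonneg_nonneg less_imp_le order_trans)
  have "norm (exp (- complex_of_real d * Z) - 1) \<le> 2 * norm (- complex_of_real d * Z)"
    using d0 ReZ1 by (intro exp_sub_one_bound) (simp add: mult_nonneg_nonneg)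
  also have "\<dots> = 2 * d * r" using d0 by (simp add: norm_mult nZ)
  finally have h1: "norm (exp (- complex_of_real d * Z) - 1) \<le> 2 * d * r" .
  have h2: "norm (exp (- complex_of_real m * Z)) \<le> exp (- c0 * m * r)"
  proof -
    have "norm (exp (- complex_of_real m * Z)) = exp (- m * Re Z)" by simp
    also have "\<dots> \<le> exp (- c0 * m * r)"
      using ReZ0 m0 by (simp add: mult.commute mult.left_commute mult_left_mono)
    finally show ?thesis .
  qed
  have "norm (ff u x \<xi> - ff s x \<xi>) = norm (exp (- complex_of_real u * Z) - exp (- complex_of_real s * Z))"
    unfolding ffe by (simp add: E_def norm_mult flip: right_diff_distrib)
  also have "\<dots> \<le> exp (- c0 * m * r) * (2 * d * r)"
    unfolding key using h1 h2 by (intro mult_mono) auto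
  finally show ?thesis by (simp add: m_def d_def r_def mult_ac)
qed

definition K3 where "K3 = enn2real (JJ a) / pi"

lemma K3_nonneg: "K3 \<ge> 0" unfolding K3_def by simp

lemma G_bound3:
  assumes "u > 0" "s > 0"
  shows "\<bar>stableG a \<delta> u x - stableG a \<delta> s x\<bar> \<le> K3 * \<bar>u - s\<bar> * min u s powr (-(a+1)/a)"
proof -
  define m where "m = min u s"
  have m0: "m > 0" using assms by (simp add: m_def)
  have "integral\<^sup>L lborel (ff u x) - integral\<^sup>L lborel (ff s x) = integral\<^sup>L lborel (\<lambda>\<xi>. ff u x \<xi> - ff s x \<xi>)"
    using integrable_ff assms by (simp add: Bochner_Integration.integral_diff)
  moreover have "integrable lborel (\<lambda>\<xi>. ff u x \<xi> - ff s x \<xi>)"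
    using integrable_ff assms by auto
  ultimately have "ennreal (norm (integral\<^sup>L lborel (ff u x) - integral\<^sup>L lborel (ff s x)))
      \<le> (\<integral>\<^sup>+\<xi>. ennreal (norm (ff u x \<xi> - ff s x \<xi>)) \<partial>lborel)"
    by (simp add: integral_norm_bound_ennreal)
  also have "\<dots> \<le> (\<integral>\<^sup>+\<xi>. ennreal (2 * \<bar>u - s\<bar>) * ennreal (\<bar>\<xi>\<bar> powr a * exp (- c0 * m * \<bar>\<xi>\<bar> powr a)) \<partial>lborel)"
    using ff_diff[OF assms] by (intro nn_integral_mono) (simp add: m_def ennreal_leI flip: ennreal_mult)
  also have "\<dots> = ennreal (2 * \<bar>u - s\<bar>) * (\<integral>\<^sup>+\<xi>. ennreal (\<bar>\<xi>\<bar> powr a * exp (- c0 * m * \<bar>\<xi>\<bar> powr a)) \<partial>lborel)"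
    by (intro nn_integral_cmult) auto
  also have "\<dots> = ennreal (2 * \<bar>u - s\<bar>) * (ennreal (m powr (-(a+1)/a)) * JJ a)"
    unfolding JJ_def using scale_p[OF c0_pos m0, of a] a1 by simp
  also have "\<dots> = ennreal (2 * \<bar>u - s\<bar> * m powr (-(a+1)/a) * enn2real (JJ a))"
    using JJ_fin[of a] a1 a2 by (simp add: ennreal_mult'' ennreal_enn2real_if mult.assoc)
  finally have "norm (integral\<^sup>L lborel (ff u x) - integral\<^sup>L lborel (ff s x))
      \<le> 2 * \<bar>u - s\<bar> * m powr (-(a+1)/a) * enn2real (JJ a)"
    by (subst (asm) ennreal_le_iff) auto
  moreover have "norm (1 / (2 * pi) * integral\<^sup>L lborel (ff u x) - 1 / (2 * pi) * integral\<^sup>L lborel (ff s x))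
     = norm (integral\<^sup>L lborel (ff u x) - integral\<^sup>L lborel (ff s x)) / (2*pi)"
  proof -
    have "1 / (2 * pi) * integral\<^sup>L lborel (ff u x) - 1 / (2 * pi) * integral\<^sup>L lborel (ff s x)
       = (integral\<^sup>L lborel (ff u x) - integral\<^sup>L lborel (ff s x)) / (2 * complex_of_real pi)"
      by (simp add: diff_divide_distrib)
    thus ?thesis by (simp add: norm_divide)
  qed
  ultimately have "norm (1 / (2 * pi) * integral\<^sup>L lborel (ff u x) - 1 / (2 * pi) * integral\<^sup>L lborel (ff s x))
      \<le> K3 * \<bar>u - s\<bar> * m powr (-(a+1)/a)"
    by (simp add: K3_def field_simps divide_right_mono)
  thus ?thesis unfolding G_eq m_def using abs_Re_le_cmod order_trans by (metis minus_complex.sel(1))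
qed

end



lemma ennreal_times_fin: "c \<ge> 0 \<Longrightarrow> J < \<infinity> \<Longrightarrow> ennreal c * J = ennreal (c * enn2real J)"
  by (subst ennreal_mult) (auto simp: ennreal_enn2real)

lemma vd_exp:
  fixes g :: "real \<Rightarrow> complex"
  assumes "(g has_vector_derivative g') (at t)"
  shows "((\<lambda>s. exp (g s)) has_vector_derivative (g' * exp (g t))) (at t)"
proof -
  have "((exp \<circ> g) has_vector_derivative (g' * exp (g t))) (at t)"
    by (rule field_vector_diff_chain_at[OF assms]) (rule DERIV_exp)
  thus ?thesis by (simp add: o_def)
qed

context stab
begin

definition FF where "FF u x k \<xi> = exp (\<i> * complex_of_real (\<xi> * x) - complex_of_real (u * \<xi> powr a) * k)"

lemma FF_deriv:
  assumes "\<xi> > 0"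
  shows "(FF u x k has_vector_derivative
      ((\<i> * complex_of_real x - complex_of_real (u * (a * \<xi> powr (a - 1))) * k) * FF u x k \<xi>)) (at \<xi>)"
  unfolding FF_def
  apply (rule vd_exp)
  using assms
  apply (auto intro!: derivative_eq_intros)
  done

lemma exp_lin_tendsto: "C > 0 \<Longrightarrow> ((\<lambda>\<xi>::real. exp (- C * \<xi>)) \<longlongrightarrow> 0) at_top"
  by real_asymp

lemma FF_meas[measurable]: "FF u x k \<in> borel_measurable borel"
  unfolding FF_def by measurable

lemma norm_FF: assumes "u \<ge> 0" "Re k \<ge> c0" "\<xi> \<ge> 0"
  shows "norm (FF u x k \<xi>) \<le> exp (- c0 * u * \<bar>\<xi>\<bar> powr a)"
proof -
  have "norm (FF u x k \<xi>) = exp (- (u * \<xi> powr a) * Re k)"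
    unfolding FF_def norm_exp_eq_Re by simp
  also have "\<dots> \<le> exp (- c0 * u * \<bar>\<xi>\<bar> powr a)"
  proof -
    have "c0 * (u * \<xi> powr a) \<le> Re k * (u * \<xi> powr a)"
      using assms by (intro mult_right_mono) auto
    thus ?thesis using assms by (simp add: algebra_simps)
  qed
  finally show ?thesis .
qed

lemma ibp_half:
  assumes u: "u > 0" and k: "Re k \<ge> c0" "norm k \<le> 1"
  shows "\<bar>x\<bar> * norm (LINT \<xi>:{0<..}|lborel. FF u x k \<xi>) \<le> 1 + a * enn2real (JJ (a - 1))"
proof -
  define D where "D \<xi> = (\<i> * complex_of_real x - complex_of_real (u * (a * \<xi> powr (a - 1))) * k) * FF u x k \<xi>" for \<xi>
  define g where "g \<xi> = complex_of_real (\<xi> powr (a - 1)) * FF u x k \<xi>" for \<xi>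
  have g_meas[measurable]: "g \<in> borel_measurable borel" unfolding g_def by measurable
  have intF: "set_integrable lborel {0<..} (FF u x k)"
    unfolding set_integrable_def
  proof (rule Bochner_Integration.integrable_bound[OF intg0[OF u]])
    show "(\<lambda>\<xi>. indicator {0<..} \<xi> *\<^sub>R FF u x k \<xi>) \<in> borel_measurable lborel" by measurable
    show "AE \<xi> in lborel. norm (indicator {0<..} \<xi> *\<^sub>R FF u x k \<xi>) \<le> norm (exp (- c0 * u * \<bar>\<xi>\<bar> powr a))"
      using norm_FF[OF _ k(1)] u by (auto simp: indicator_def)
  qed
  have intg: "set_integrable lborel {0<..} g"
    unfolding set_integrable_def
  proof (rule Bochner_Integration.integrable_bound[OF intgp[OF u, of "a - 1"]])
    show "(\<lambda>\<xi>. indicator {0<..} \<xi> *\<^sub>R g \<xi>) \<in> borel_measurable lborel" by measurable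
    show "AE \<xi> in lborel. norm (indicator {0<..} \<xi> *\<^sub>R g \<xi>) \<le> norm (\<bar>\<xi>\<bar> powr (a - 1) * exp (- c0 * u * \<bar>\<xi>\<bar> powr a))"
    proof (intro AE_I2)
      fix \<xi> :: real
      show "norm (indicator {0<..} \<xi> *\<^sub>R g \<xi>) \<le> norm (\<bar>\<xi>\<bar> powr (a - 1) * exp (- c0 * u * \<bar>\<xi>\<bar> powr a))"
      proof (cases "\<xi> > 0")
        case True
        have "norm (g \<xi>) \<le> \<xi> powr (a - 1) * exp (- c0 * u * \<bar>\<xi>\<bar> powr a)"
        proof -
          have nf: "norm (FF u x k \<xi>) \<le> exp (- c0 * u * \<bar>\<xi>\<bar> powr a)"
            using norm_FF[where u=u and x=x and k=k and \<xi>=\<xi>] k(1) u True by auto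
          show ?thesis unfolding g_def norm_mult using nf by (simp add: mult_left_mono)
        qed
        thus ?thesis using True by (simp add: indicator_def)
      qed (simp add: indicator_def)
    qed
    show "a - 1 \<ge> 0" "a - 1 \<le> 2" using a1 a2 by auto
  qed
  have D_eq: "D = (\<lambda>\<xi>. (\<i> * complex_of_real x) * FF u x k \<xi> - (complex_of_real (u * a) * k) * g \<xi>)"
    unfolding D_def g_def by (auto simp: algebra_simps)
  have intD: "set_integrable lborel {0<..} D"
    unfolding D_eq using intF intg by (intro set_integral_diff(1) set_integrable_mult_right) auto
  have "(LBINT \<xi>=0..\<infinity>. D \<xi>) = 0 - 1"
  proof (rule interval_integral_FTC_integrable[where F = "FF u x k"])
    show "(0::ereal) < \<infinity>" by simp
    fix \<xi> assume "0 < ereal \<xi>" "ereal \<xi> < \<infinity>"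
    hence xi: "\<xi> > 0" by simp
    show "(FF u x k has_vector_derivative D \<xi>) (at \<xi>)" unfolding D_def by (rule FF_deriv[OF xi])
    show "isCont D \<xi>" unfolding D_def FF_def using xi by (intro continuous_intros) auto
  next
    show "set_integrable lborel (einterval 0 \<infinity>) D" using intD by (simp add: zero_ereal_def)
  next
    have p: "((\<lambda>\<xi>::real. \<xi> powr a) \<longlongrightarrow> 0) (at_right 0)"
      using a1 by (intro tendsto_zero_powrI) (auto simp: eventually_at_right_less eventually_at_filter intro: tendsto_ident_at)
    have "((\<lambda>\<xi>. FF u x k \<xi>) \<longlongrightarrow> exp (\<i> * complex_of_real (0 * x) - complex_of_real (u * 0) * k)) (at_right 0)"
      unfolding FF_def by (intro tendsto_intros p tendsto_ident_at)
    thus "((FF u x k \<circ> real_of_ereal) \<longlongrightarrow> 1) (at_right 0)"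
      by (simp add: zero_ereal_def ereal_tendsto_simps1)
  next
    have "((FF u x k) \<longlongrightarrow> 0) at_top"
    proof (rule Lim_null_comparison)
      show "\<forall>\<^sub>F \<xi> in at_top. norm (FF u x k \<xi>) \<le> exp (- (c0 * u) * \<xi>)"
        using eventually_ge_at_top[of 1]
      proof eventually_elim
        case (elim \<xi>)
        have "\<xi> powr 1 \<le> \<xi> powr a" using elim a1 by (intro powr_mono) auto
        hence "\<xi> \<le> \<bar>\<xi>\<bar> powr a" using elim by simp
        hence "exp (- c0 * u * \<bar>\<xi>\<bar> powr a) \<le> exp (- (c0 * u) * \<xi>)"
          using c0_pos u by (simp add: mult_left_mono)
        thus ?case using norm_FF[where u=u and x=x and k=k and \<xi>=\<xi>] k(1) u elim by linarith
      qed
      show "((\<lambda>\<xi>. exp (- (c0 * u) * \<xi>)) \<longlongrightarrow> 0) at_top"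
        using c0_pos u by (intro exp_lin_tendsto) auto
    qed
    thus "((FF u x k \<circ> real_of_ereal) \<longlongrightarrow> 0) (at_left \<infinity>)"
      by (simp add: ereal_tendsto_simps1)
  qed
  hence "(LINT \<xi>:{0<..}|lborel. D \<xi>) = -1"
    by (simp add: interval_lebesgue_integral_0_infty)
  moreover have "(LINT \<xi>:{0<..}|lborel. D \<xi>) =
     (\<i> * complex_of_real x) * (LINT \<xi>:{0<..}|lborel. FF u x k \<xi>)
      - (complex_of_real (u * a) * k) * (LINT \<xi>:{0<..}|lborel. g \<xi>)"
    unfolding D_eq using intF intg by (subst set_integral_diff(2)) auto
  ultimately have eq: "(\<i> * complex_of_real x) * (LINT \<xi>:{0<..}|lborel. FF u x k \<xi>)
      = -1 + (complex_of_real (u * a) * k) * (LINT \<xi>:{0<..}|lborel. g \<xi>)"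
    by (simp add: algebra_simps)
  have ng: "norm (LINT \<xi>:{0<..}|lborel. g \<xi>) \<le> u powr (-1) * enn2real (JJ (a - 1))"
  proof -
    have "ennreal (norm (LINT \<xi>:{0<..}|lborel. g \<xi>)) \<le> (\<integral>\<^sup>+\<xi>. ennreal (norm (indicator {0<..} \<xi> *\<^sub>R g \<xi>)) \<partial>lborel)"
      unfolding set_lebesgue_integral_def
      by (rule integral_norm_bound_ennreal) (use intg in \<open>simp add: set_integrable_def\<close>)
    also have "\<dots> \<le> (\<integral>\<^sup>+\<xi>. ennreal (\<bar>\<xi>\<bar> powr (a - 1) * exp (- c0 * u * \<bar>\<xi>\<bar> powr a)) \<partial>lborel)"
    proof (intro nn_integral_mono ennreal_leI)
      fix \<xi> :: real
      show "norm (indicator {0<..} \<xi> *\<^sub>R g \<xi>) \<le> \<bar>\<xi>\<bar> powr (a - 1) * exp (- c0 * u * \<bar>\<xi>\<bar> powr a)"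
      proof (cases "\<xi> > 0")
        case True
        have "norm (g \<xi>) \<le> \<xi> powr (a - 1) * exp (- c0 * u * \<bar>\<xi>\<bar> powr a)"
        proof -
          have nf: "norm (FF u x k \<xi>) \<le> exp (- c0 * u * \<bar>\<xi>\<bar> powr a)"
            using norm_FF[where u=u and x=x and k=k and \<xi>=\<xi>] k(1) u True by auto
          show ?thesis unfolding g_def norm_mult using nf by (simp add: mult_left_mono)
        qed
        thus ?thesis using True by (simp add: indicator_def)
      qed (simp add: indicator_def)
    qed
    also have "\<dots> = ennreal (u powr (-(a - 1 + 1)/a)) * JJ (a - 1)"
      unfolding JJ_def using a1 by (intro scale_p[OF c0_pos u]) auto
    also have "\<dots> = ennreal (u powr (-1) * enn2real (JJ (a - 1)))"
    proof -
      have "u powr (-(a - 1 + 1)/a) = u powr (-1)" using a1 by simp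
      thus ?thesis using JJ_fin[of "a - 1"] a1 a2 by (simp add: ennreal_times_fin)
    qed
    finally show ?thesis by (subst (asm) ennreal_le_iff) auto
  qed
  have "\<bar>x\<bar> * norm (LINT \<xi>:{0<..}|lborel. FF u x k \<xi>) = norm ((\<i> * complex_of_real x) * (LINT \<xi>:{0<..}|lborel. FF u x k \<xi>))"
    by (simp add: norm_mult)
  also have "\<dots> \<le> 1 + norm ((complex_of_real (u * a) * k) * (LINT \<xi>:{0<..}|lborel. g \<xi>))"
    unfolding eq using norm_triangle_ineq[of "-1::complex"] by simp
  also have "norm ((complex_of_real (u * a) * k) * (LINT \<xi>:{0<..}|lborel. g \<xi>)) \<le> (u * a) * 1 * (u powr (-1) * enn2real (JJ (a - 1)))"
  proof -
    have "norm (complex_of_real (u * a)) = u * a" using u a1 by (simp only: norm_of_real) simp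
    thus ?thesis unfolding norm_mult using u a1 k(2) ng by (intro mult_mono) auto
  qed
  also have "\<dots> = a * enn2real (JJ (a - 1))" using u by (simp add: powr_minus field_simps)
  finally show ?thesis by simp
qed

end



context stab
begin

definition K2 where "K2 = (1 + a * enn2real (JJ (a - 1))) / pi"

lemma K2_pos: "K2 > 0" unfolding K2_def using a1 by (simp add: add_pos_nonneg)

lemma G_bound2: assumes u: "u > 0" shows "\<bar>x\<bar> * \<bar>stableG a \<delta> u x\<bar> \<le> K2"
proof -
  define kp where "kp = exp (- \<i> * complex_of_real (\<delta> * pi / 2))"
  define km where "km = exp (- \<i> * complex_of_real (- (\<delta> * pi) / 2))"
  have Rkp: "Re kp \<ge> c0" "norm kp \<le> 1" unfolding kp_def c0_def by (simp_all add: Re_exp)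
  have Rkm: "Re km \<ge> c0" "norm km \<le> 1" unfolding km_def c0_def by (simp_all add: Re_exp)
  have intf: "integrable lborel (ff u x)" by (rule integrable_ff[OF u])
  have "integral\<^sup>L lborel (ff u x)
      = integral\<^sup>L lborel (\<lambda>\<xi>. indicator {0<..} \<xi> *\<^sub>R ff u x \<xi> + indicator {..<0} \<xi> *\<^sub>R ff u x \<xi>)"
  proof (rule integral_cong_AE)
    show "AE \<xi> in lborel. ff u x \<xi> = indicator {0<..} \<xi> *\<^sub>R ff u x \<xi> + indicator {..<0} \<xi> *\<^sub>R ff u x \<xi>"
      using AE_lborel_singleton[of 0] by eventually_elim (auto simp: indicator_def)
  qed auto
  also have "\<dots> = (LINT \<xi>:{0<..}|lborel. ff u x \<xi>) + (LINT \<xi>:{..<0}|lborel. ff u x \<xi>)"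
    unfolding set_lebesgue_integral_def
    by (intro Bochner_Integration.integral_add integrable_mult_indicator intf) auto
  also have "(LINT \<xi>:{0<..}|lborel. ff u x \<xi>) = (LINT \<xi>:{0<..}|lborel. FF u x kp \<xi>)"
    by (intro set_lebesgue_integral_cong) (auto simp: ff_def FF_def kp_def)
  also have "(LINT \<xi>:{..<0}|lborel. ff u x \<xi>) = (LINT \<eta>:{0<..}|lborel. FF u (-x) km \<eta>)"
  proof -
    have "(LINT \<xi>:{..<0}|lborel. ff u x \<xi>)
        = \<bar>-1\<bar> *\<^sub>R integral\<^sup>L lborel (\<lambda>\<eta>. indicator {..<0} (0 + -1 * \<eta>) *\<^sub>R ff u x (0 + -1 * \<eta>))"
      unfolding set_lebesgue_integral_def by (rule lborel_integral_real_affine) simp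
    also have "\<dots> = integral\<^sup>L lborel (\<lambda>\<eta>. indicator {0<..} \<eta> *\<^sub>R FF u (-x) km \<eta>)"
    proof -
      have "(\<lambda>\<eta>. indicator {..<0} (0 + -1 * \<eta>) *\<^sub>R ff u x (0 + -1 * \<eta>)) = (\<lambda>\<eta>. indicator {0<..} \<eta> *\<^sub>R FF u (-x) km \<eta>)"
        by (rule ext) (auto simp: indicator_def ff_def FF_def km_def)
      thus ?thesis by simp
    qed
    finally show ?thesis unfolding set_lebesgue_integral_def .
  qed
  finally have eq: "integral\<^sup>L lborel (ff u x) = (LINT \<xi>:{0<..}|lborel. FF u x kp \<xi>) + (LINT \<eta>:{0<..}|lborel. FF u (-x) km \<eta>)" .
  have "\<bar>x\<bar> * norm (integral\<^sup>L lborel (ff u x))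
      \<le> \<bar>x\<bar> * norm (LINT \<xi>:{0<..}|lborel. FF u x kp \<xi>) + \<bar>-x\<bar> * norm (LINT \<eta>:{0<..}|lborel. FF u (-x) km \<eta>)"
    unfolding eq abs_minus_cancel distrib_left[symmetric] by (intro mult_left_mono norm_triangle_ineq) auto
  also have "\<dots> \<le> (1 + a * enn2real (JJ (a - 1))) + (1 + a * enn2real (JJ (a - 1)))"
    by (intro add_mono ibp_half u Rkp Rkm)
  finally have h: "\<bar>x\<bar> * norm (integral\<^sup>L lborel (ff u x)) \<le> 2 * (1 + a * enn2real (JJ (a - 1)))" by simp
  have "\<bar>x\<bar> * \<bar>stableG a \<delta> u x\<bar> \<le> \<bar>x\<bar> * norm (1 / (2 * pi) * integral\<^sup>L lborel (ff u x))"
    unfolding G_eq by (intro mult_left_mono abs_Re_le_cmod) auto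
  also have "\<dots> = (\<bar>x\<bar> * norm (integral\<^sup>L lborel (ff u x))) / (2 * pi)"
    by (simp add: norm_mult norm_divide)
  also have "\<dots> \<le> 2 * (1 + a * enn2real (JJ (a - 1))) / (2 * pi)"
    using h by (intro divide_right_mono) auto
  also have "\<dots> = K2" unfolding K2_def by (simp add: field_simps)
  finally show ?thesis .
qed

end



lemma nn_inv1sq: "(\<integral>\<^sup>+x. ennreal (inverse (1 + x^2)) \<partial>lborel) = ennreal pi"
proof -
  have "(\<integral>\<^sup>+x. ennreal (inverse (1 + x^2)) \<partial>lborel) = ennreal (integral\<^sup>L lborel (\<lambda>x::real. inverse (1 + x^2)))"
    by (rule nn_integral_eq_integral[OF integrable_inv1sq]) (auto simp: add_nonneg_eq_0_iff)
  also have "integral\<^sup>L lborel (\<lambda>x::real. inverse (1 + x^2)) = pi"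
    using LBINT_inverse_1_plus_square
    by (simp add: interval_lebesgue_integral_def set_lebesgue_integral_def einterval_def)
  finally show ?thesis .
qed

lemma L2_bound:
  fixes h :: "real \<Rightarrow> real"
  assumes h0: "\<And>x. 0 \<le> h x" and hA: "\<And>x. h x \<le> A^2" and hB: "\<And>x. x^2 * h x \<le> B^2"
    and A: "A \<ge> 0" and B: "B > 0"
  shows "(\<integral>\<^sup>+x. ennreal (h x) \<partial>lborel) \<le> ennreal (2 * pi * A * B)"
proof (cases "A = 0")
  case True
  hence "\<And>x. h x = 0" using h0 hA by (metis order_antisym power_zero_numeral)
  thus ?thesis by simp
next
  case False
  hence A0: "A > 0" using A by simp
  define c where "c = A / B"
  have c0: "c > 0" using A0 B by (simp add: c_def)
  have pw: "h x \<le> (2 * A^2) * inverse (1 + (0 + c * x)^2)" for x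
  proof -
    have pos: "B^2 + A^2 * x^2 > 0" using B by (simp add: add_pos_nonneg)
    have "h x * (B^2 + A^2 * x^2) = B^2 * h x + A^2 * (x^2 * h x)" by (simp add: algebra_simps)
    also have "\<dots> \<le> B^2 * A^2 + A^2 * B^2"
      using hA hB by (intro add_mono mult_left_mono) auto
    finally have "h x \<le> 2 * A^2 * B^2 / (B^2 + A^2 * x^2)" using pos by (simp add: field_simps)
    also have "\<dots> = (2 * A^2) * inverse (1 + (0 + c * x)^2)"
      using B A0 by (simp add: c_def field_simps power2_eq_square)
    finally show ?thesis .
  qed
  have "(\<integral>\<^sup>+x. ennreal (h x) \<partial>lborel) \<le> (\<integral>\<^sup>+x. ennreal (2 * A^2) * ennreal (inverse (1 + (0 + c * x)^2)) \<partial>lborel)"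
  proof (intro nn_integral_mono)
    fix x
    have "ennreal (h x) \<le> ennreal ((2 * A^2) * inverse (1 + (0 + c * x)^2))" using pw by (intro ennreal_leI)
    also have "\<dots> = ennreal (2 * A^2) * ennreal (inverse (1 + (0 + c * x)^2))"
      by (intro ennreal_mult) (auto simp: add_nonneg_eq_0_iff)
    finally show "ennreal (h x) \<le> ennreal (2 * A^2) * ennreal (inverse (1 + (0 + c * x)^2))" .
  qed
  also have "\<dots> = ennreal (2 * A^2) * (\<integral>\<^sup>+x. ennreal (inverse (1 + (0 + c * x)^2)) \<partial>lborel)"
    by (intro nn_integral_cmult) auto
  also have "(\<integral>\<^sup>+x. ennreal (inverse (1 + (0 + c * x)^2)) \<partial>lborel) = ennreal (1 / c) * ennreal pi"
  proof -
    have "ennreal pi = ennreal \<bar>c\<bar> * (\<integral>\<^sup>+x. ennreal (inverse (1 + (0 + c * x)^2)) \<partial>lborel)"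
      unfolding nn_inv1sq[symmetric] using c0 by (intro nn_integral_real_affine) auto
    hence "ennreal (1 / c) * ennreal pi = ennreal (1/c) * ennreal c * (\<integral>\<^sup>+x. ennreal (inverse (1 + (0 + c * x)^2)) \<partial>lborel)"
      using c0 by (simp add: mult.assoc)
    also have "ennreal (1/c) * ennreal c = 1" using c0 by (simp flip: ennreal_mult)
    finally show ?thesis by simp
  qed
  also have "ennreal (2 * A^2) * (ennreal (1 / c) * ennreal pi) = ennreal (2 * A^2 * (1 / c) * pi)"
    using c0 by (simp only: ennreal_mult'[symmetric] mult_nonneg_nonneg zero_le_power2 zero_le_numeral less_imp_le pi_ge_zero divide_nonneg_nonneg zero_le_one mult.assoc)
  also have "2 * A^2 * (1 / c) * pi = 2 * pi * A * B" using A0 B by (simp add: c_def field_simps power2_eq_square)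
  finally show ?thesis .
qed




definition Hf :: "real \<Rightarrow> real \<Rightarrow> real \<Rightarrow> real" where
  "Hf A B x = (if x = 0 then A^2 else min (A^2) (B^2 / x^2))"

lemma Hf_meas[measurable]: "Hf A B \<in> borel_measurable borel"
  unfolding Hf_def by measurable

lemma Hf_nonneg: "Hf A B x \<ge> 0" unfolding Hf_def by auto

lemma Hf_le: "Hf A B x \<le> A^2" unfolding Hf_def by auto

lemma Hf_bound:
  assumes "\<bar>g\<bar> \<le> A" "\<bar>x\<bar> * \<bar>g\<bar> \<le> B"
  shows "g^2 \<le> Hf A B x"
proof -
  have gA: "g^2 \<le> A^2" using power_mono[OF assms(1) abs_ge_zero, of 2] by simp
  show ?thesis
  proof (cases "x = 0")
    case False
    have "(\<bar>x\<bar> * \<bar>g\<bar>)^2 \<le> B^2"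
      using assms by (intro power_mono) auto
    hence "x^2 * g^2 \<le> B^2" by (simp add: power_mult_distrib)
    hence "g^2 \<le> B^2 / x^2" using False by (simp add: field_simps)
    thus ?thesis using gA False by (simp add: Hf_def)
  qed (use gA in \<open>simp add: Hf_def\<close>)
qed

lemma Hf_L2:
  assumes "A \<ge> 0" "B > 0"
  shows "(\<integral>\<^sup>+x. ennreal (Hf A B x) \<partial>lborel) \<le> ennreal (2 * pi * A * B)"
proof (rule L2_bound[OF Hf_nonneg Hf_le _ assms])
  fix x :: real
  show "x^2 * Hf A B x \<le> B^2"
  proof (cases "x = 0")
    case False
    have "x^2 * min (A^2) (B^2 / x^2) \<le> x^2 * (B^2 / x^2)" by (intro mult_left_mono) auto
    thus ?thesis using False by (simp add: Hf_def)
  qed (simp add: Hf_def)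
qed

lemma series_L2:
  fixes F :: "real \<Rightarrow> real" and w A :: "nat \<Rightarrow> real"
  assumes w: "\<And>n. w n \<ge> 0" "summable w" and A: "\<And>n. 0 \<le> A n" "\<And>n. A n \<le> M" and B: "B > 0"
    and F: "\<And>x. F x \<le> (\<Sum>n. w n * Hf (A n) B x)"
  shows "(\<integral>\<^sup>+x. ennreal (F x) \<partial>lborel) \<le> ennreal (2 * pi * B * (\<Sum>n. w n * A n))"
proof -
  have M0: "M \<ge> 0" using A(1)[of 0] A(2)[of 0] by linarith
  have sumH: "summable (\<lambda>n. w n * Hf (A n) B x)" for x
  proof (rule summable_comparison_test[OF _ summable_mult2[OF w(2), of "M^2"]])
    show "\<exists>N. \<forall>n\<ge>N. norm (w n * Hf (A n) B x) \<le> w n * M^2"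
    proof (intro exI allI impI)
      fix n
      have "Hf (A n) B x \<le> M^2" using Hf_le[of "A n" B x] A[of n] by (meson order_trans power_mono)
      thus "norm (w n * Hf (A n) B x) \<le> w n * M^2" using w(1)[of n] Hf_nonneg[of "A n" B x]
        by (simp add: abs_mult mult_left_mono)
    qed
  qed
  have sumA: "summable (\<lambda>n. w n * A n)"
  proof (rule summable_comparison_test[OF _ summable_mult2[OF w(2), of "M"]])
    show "\<exists>N. \<forall>n\<ge>N. norm (w n * A n) \<le> w n * M"
      using w(1) A by (auto simp: abs_mult intro!: mult_left_mono)
  qed
  have "(\<integral>\<^sup>+x. ennreal (F x) \<partial>lborel) \<le> (\<integral>\<^sup>+x. ennreal (\<Sum>n. w n * Hf (A n) B x) \<partial>lborel)"
    using F by (intro nn_integral_mono ennreal_leI)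
  also have "\<dots> = (\<integral>\<^sup>+x. (\<Sum>n. ennreal (w n * Hf (A n) B x)) \<partial>lborel)"
    using sumH w(1) Hf_nonneg by (intro nn_integral_cong) (simp add: suminf_ennreal2)
  also have "\<dots> = (\<Sum>n. \<integral>\<^sup>+x. ennreal (w n * Hf (A n) B x) \<partial>lborel)"
    by (intro nn_integral_suminf) measurable
  also have "\<dots> \<le> (\<Sum>n. ennreal (2 * pi * B * (w n * A n)))"
  proof (intro suminf_le allI)
    fix n
    have "(\<integral>\<^sup>+x. ennreal (w n * Hf (A n) B x) \<partial>lborel) = ennreal (w n) * (\<integral>\<^sup>+x. ennreal (Hf (A n) B x) \<partial>lborel)"
      using w(1)[of n] Hf_nonneg by (simp add: ennreal_mult nn_integral_cmult)
    also have "\<dots> \<le> ennreal (w n) * ennreal (2 * pi * A n * B)"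
      by (intro mult_left_mono Hf_L2 A B) auto
    also have "\<dots> = ennreal (2 * pi * B * (w n * A n))"
      using w(1)[of n] A(1)[of n] B by (simp add: ennreal_mult[symmetric] mult_ac)
    finally show "(\<integral>\<^sup>+x. ennreal (w n * Hf (A n) B x) \<partial>lborel) \<le> ennreal (2 * pi * B * (w n * A n))" .
  qed auto
  also have "\<dots> = ennreal (\<Sum>n. 2 * pi * B * (w n * A n))"
    using sumA w(1) A(1) B by (intro suminf_ennreal2) (auto intro: summable_mult)
  also have "(\<Sum>n. 2 * pi * B * (w n * A n)) = 2 * pi * B * (\<Sum>n. w n * A n)"
    using sumA by (intro suminf_mult)
  finally show ?thesis .
qed

lemma series_CS:
  fixes w b :: "nat \<Rightarrow> real"
  assumes w: "\<And>n. w n \<ge> 0" "w sums W" "W \<le> 1" and b: "\<And>n. \<bar>b n\<bar> \<le> M"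
  shows "summable (\<lambda>n. w n * b n)" "summable (\<lambda>n. w n * (b n)^2)"
    "(\<Sum>n. w n * b n)^2 \<le> (\<Sum>n. w n * (b n)^2)"
proof -
  have sw: "summable w" using w(2) by (simp add: sums_summable)
  show s1: "summable (\<lambda>n. w n * b n)"
    by (rule summable_comparison_test[OF _ summable_mult2[OF sw, of M]])
       (use w(1) b in \<open>auto simp: abs_mult intro!: mult_left_mono\<close>)
  show s2: "summable (\<lambda>n. w n * (b n)^2)"
  proof (rule summable_comparison_test[OF _ summable_mult2[OF sw, of "M^2"]])
    show "\<exists>N. \<forall>n\<ge>N. norm (w n * (b n)^2) \<le> w n * M^2"
    proof (intro exI allI impI)
      fix n
      have "(b n)^2 \<le> M^2" using power_mono[OF b[of n] abs_ge_zero, of 2] by simp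
      thus "norm (w n * (b n)^2) \<le> w n * M^2" using w(1)[of n] by (simp add: abs_mult mult_left_mono)
    qed
  qed
  define S1 where "S1 = (\<Sum>n. w n * b n)"
  define S2 where "S2 = (\<Sum>n. w n * (b n)^2)"
  have "(\<lambda>n. w n * (b n)^2 - 2 * S1 * (w n * b n) + S1^2 * w n) sums (S2 - 2 * S1 * S1 + S1^2 * W)"
    unfolding S1_def S2_def
    by (intro sums_add sums_diff sums_mult w(2) summable_sums s1 s2)
  moreover have "(\<lambda>n. w n * (b n)^2 - 2 * S1 * (w n * b n) + S1^2 * w n) = (\<lambda>n. w n * (b n - S1)^2)"
    by (rule ext) (simp add: power2_eq_square algebra_simps)
  ultimately have ss: "(\<lambda>n. w n * (b n - S1)^2) sums (S2 - 2 * S1 * S1 + S1^2 * W)" by simp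
  have pos: "\<And>n. (0::real) \<le> w n * (b n - S1)^2" using w(1) by auto
  have "0 \<le> S2 - 2 * S1 * S1 + S1^2 * W"
    by (rule sums_le[OF _ sums_zero ss]) (simp add: pos)
  moreover have "S1^2 * W \<le> S1^2" using w(3) by (simp add: mult_left_le)
  ultimately show "S1^2 \<le> S2" by (simp add: power2_eq_square)
qed




definition pw :: "real \<Rightarrow> nat \<Rightarrow> real" where "pw l n = exp (- l) * l ^ n / fact n"

lemma pw_nonneg: "l \<ge> 0 \<Longrightarrow> pw l n \<ge> 0" unfolding pw_def by simp

lemma pw_sums: "pw l sums 1"
proof -
  have "(\<lambda>n. exp (- l) * (l ^ n /\<^sub>R fact n)) sums (exp (- l) * exp l)"
    by (intro sums_mult exp_converges)
  moreover have "(\<lambda>n. exp (- l) * (l ^ n /\<^sub>R fact n)) = pw l"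
    by (rule ext) (simp add: pw_def divide_inverse)
  moreover have "exp (- l) * exp l = 1" by (simp flip: exp_add)
  ultimately show ?thesis by simp
qed

lemma pw_Suc: "pw l (Suc n) * real (Suc n) = l * pw l n"
  unfolding pw_def by (simp add: field_simps del: of_nat_Suc)

lemma pw_sums1: "(\<lambda>n. pw l n * real n) sums l"
proof -
  have "(\<lambda>n. pw l (Suc n) * real (Suc n)) sums (l * 1)"
    unfolding pw_Suc by (intro sums_mult pw_sums)
  hence "(\<lambda>n. pw l n * real n) sums (l * 1 + pw l 0 * real 0)"
    by (subst (asm) sums_Suc_iff)
  thus ?thesis by simp
qed

lemma pw_sums2: "(\<lambda>n. pw l n * (real n * (real n - 1))) sums (l^2)"
proof -
  have e: "pw l (Suc (Suc n)) * (real (Suc (Suc n)) * (real (Suc (Suc n)) - 1)) = l^2 * pw l n" for n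
  proof -
    have "pw l (Suc (Suc n)) * (real (Suc (Suc n)) * (real (Suc (Suc n)) - 1))
        = (pw l (Suc (Suc n)) * real (Suc (Suc n))) * real (Suc n)" by (simp add: algebra_simps)
    also have "\<dots> = l * (pw l (Suc n) * real (Suc n))" by (simp only: pw_Suc mult.assoc)
    also have "\<dots> = l^2 * pw l n" by (simp only: pw_Suc power2_eq_square mult.assoc)
    finally show ?thesis .
  qed
  have "(\<lambda>n. pw l (Suc (Suc n)) * (real (Suc (Suc n)) * (real (Suc (Suc n)) - 1))) sums (l^2 * 1)"
    unfolding e by (intro sums_mult pw_sums)
  hence "(\<lambda>n. pw l (Suc n) * (real (Suc n) * (real (Suc n) - 1))) sums (l^2 * 1 + pw l (Suc 0) * (real (Suc 0) * (real (Suc 0) - 1)))"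
    by (subst (asm) sums_Suc_iff[where f = "\<lambda>n. pw l (Suc n) * (real (Suc n) * (real (Suc n) - 1))"])
  hence "(\<lambda>n. pw l (Suc n) * (real (Suc n) * (real (Suc n) - 1))) sums (l^2)" by simp
  hence "(\<lambda>n. pw l n * (real n * (real n - 1))) sums (l^2 + pw l 0 * (real 0 * (real 0 - 1)))"
    by (subst (asm) sums_Suc_iff)
  thus ?thesis by simp
qed

lemma pw_var: "(\<lambda>n. pw l n * (real n - l)^2) sums l"
proof -
  have "(\<lambda>n. pw l n * (real n * (real n - 1)) + (1 - 2 * l) * (pw l n * real n) + l^2 * pw l n)
      sums (l^2 + (1 - 2 * l) * l + l^2 * 1)"
    by (intro sums_add sums_mult pw_sums pw_sums1 pw_sums2)
  moreover have "(\<lambda>n. pw l n * (real n * (real n - 1)) + (1 - 2 * l) * (pw l n * real n) + l^2 * pw l n)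
      = (\<lambda>n. pw l n * (real n - l)^2)"
    by (rule ext) (simp add: power2_eq_square algebra_simps)
  moreover have "l^2 + (1 - 2 * l) * l + l^2 * 1 = l" by (simp add: power2_eq_square algebra_simps)
  ultimately show ?thesis by simp
qed

lemma pw_summable_bounded:
  assumes "l \<ge> 0" "\<And>n. \<bar>b n\<bar> \<le> M"
  shows "summable (\<lambda>n. pw l n * b n)"
  by (rule summable_comparison_test[OF _ summable_mult2[OF sums_summable[OF pw_sums[of l]], of M]])
     (use assms pw_nonneg in \<open>auto simp: abs_mult intro!: mult_left_mono\<close>)

lemma neg_moment_pw:
  assumes l: "l > 0" and p: "0 < p" "p \<le> 1"
  shows "summable (\<lambda>n. pw l (Suc n) * real (Suc n) powr (-p))"
    "(\<Sum>n. pw l (Suc n) * real (Suc n) powr (-p)) \<le> 6 * l powr (-p)"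
proof -
  have bnd: "\<bar>real (Suc n) powr (-p)\<bar> \<le> 1" for n
  proof -
    have "real (Suc n) powr (-p) \<le> real (Suc n) powr 0" using p by (intro powr_mono) auto
    thus ?thesis by simp
  qed
  have sS: "summable (\<lambda>n. pw l (Suc n) * b n)" if "\<And>n. \<bar>b n\<bar> \<le> M" for b M
  proof -
    have "summable (\<lambda>n. pw l n * (if n = 0 then 0 else b (n - 1)))"
      using that l by (intro pw_summable_bounded[of l _ "\<bar>M\<bar>"]) (auto intro: order_trans[OF _ abs_ge_self])
    hence "summable (\<lambda>n. pw l (Suc n) * (if Suc n = 0 then 0 else b (Suc n - 1)))"
      by (subst summable_Suc_iff)
    thus ?thesis by simp
  qed
  show s: "summable (\<lambda>n. pw l (Suc n) * real (Suc n) powr (-p))" by (rule sS[OF bnd])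
  show "(\<Sum>n. pw l (Suc n) * real (Suc n) powr (-p)) \<le> 6 * l powr (-p)"
  proof (cases "l \<ge> 1")
    case True
    define g where "g n = pw l n * (2 * l powr (-p) + 4 * (real n - l)^2 / l^2)" for n
    have gs: "g sums (2 * l powr (-p) * 1 + 4 / l^2 * l)"
    proof -
      have "(\<lambda>n. 2 * l powr (-p) * pw l n + 4 / l^2 * (pw l n * (real n - l)^2)) sums (2 * l powr (-p) * 1 + 4 / l^2 * l)"
        by (intro sums_add sums_mult pw_sums pw_var)
      moreover have "(\<lambda>n. 2 * l powr (-p) * pw l n + 4 / l^2 * (pw l n * (real n - l)^2)) = g"
        by (rule ext) (simp add: g_def algebra_simps)
      ultimately show ?thesis by simp
    qed
    have pt: "real (Suc n) powr (-p) \<le> 2 * l powr (-p) + 4 * (real (Suc n) - l)^2 / l^2" for n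
    proof (cases "2 * real (Suc n) \<ge> l")
      case True
      have "real (Suc n) powr (-p) \<le> (l / 2) powr (-p)"
        using True l p by (intro powr_mono2') auto
      also have "\<dots> = 2 powr p * l powr (-p)" using l by (simp add: powr_divide powr_minus field_simps)
      also have "\<dots> \<le> 2 * l powr (-p)"
      proof -
        have "(2::real) powr p \<le> 2 powr 1" using p by (intro powr_mono) auto
        thus ?thesis by (intro mult_right_mono) auto
      qed
      finally show ?thesis by (smt (verit) divide_nonneg_nonneg zero_le_power2)
    next
      case False
      have "l - real (Suc n) \<ge> l / 2" using False by simp
      hence "(l / 2)^2 \<le> (real (Suc n) - l)^2"
        using l by (metis abs_le_square_iff abs_of_nonneg half_gt_zero less_imp_le minus_diff_eq order_trans power2_abs abs_minus_cancel)
      hence "1 \<le> 4 * (real (Suc n) - l)^2 / l^2" using l by (simp add: field_simps power2_eq_square)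
      moreover have "real (Suc n) powr (-p) \<le> 1" using bnd[of n] by simp
      moreover have "0 \<le> l powr (-p)" by simp
      ultimately show ?thesis by linarith
    qed
    have gS: "(\<lambda>n. g (Suc n)) sums (2 * l powr (-p) * 1 + 4 / l^2 * l - g 0)"
      using gs by (subst sums_Suc_iff) simp
    have "(\<Sum>n. pw l (Suc n) * real (Suc n) powr (-p)) \<le> 2 * l powr (-p) * 1 + 4 / l^2 * l - g 0"
    proof (rule sums_le[OF _ summable_sums[OF s] gS])
      fix n show "pw l (Suc n) * real (Suc n) powr (-p) \<le> g (Suc n)"
        unfolding g_def using pt[of n] pw_nonneg[of l "Suc n"] l by (intro mult_left_mono) auto
    qed
    also have "g 0 \<ge> 0" unfolding g_def using pw_nonneg[of l 0] l by (intro mult_nonneg_nonneg) auto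
    hence "2 * l powr (-p) * 1 + 4 / l^2 * l - g 0 \<le> 2 * l powr (-p) + 4 / l" using l
      by (simp add: power2_eq_square)
    also have "4 / l \<le> 4 * l powr (-p)"
    proof -
      have "l powr (-1) \<le> l powr (-p)" using True p by (intro powr_mono) auto
      thus ?thesis using l by (simp add: powr_minus divide_inverse)
    qed
    finally show ?thesis by simp
  next
    case False
    have "(\<Sum>n. pw l (Suc n) * real (Suc n) powr (-p)) \<le> (\<Sum>n. pw l (Suc n))"
    proof (rule suminf_le)
      fix n show "pw l (Suc n) * real (Suc n) powr (-p) \<le> pw l (Suc n)"
        using bnd[of n] pw_nonneg[of l "Suc n"] l by (simp add: mult_left_le)
    qed (use s sums_summable[OF pw_sums] in \<open>auto simp: summable_Suc_iff\<close>)
    also have "(\<Sum>n. pw l (Suc n)) = 1 - pw l 0"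
      using pw_sums[of l] by (subst suminf_split_head) (auto simp: sums_iff)
    also have "\<dots> \<le> 1" using pw_nonneg[of l 0] l by simp
    also have "1 \<le> l powr (-p)"
    proof -
      have "l powr 0 \<le> l powr (-p)" using False l p by (intro powr_mono') auto
      thus ?thesis using l by simp
    qed
    finally have "(\<Sum>n. pw l (Suc n) * real (Suc n) powr (-p)) \<le> l powr (-p)" .
    thus ?thesis using powr_ge_zero[of l "-p"] by linarith
  qed
qed




context stab
begin

lemma G_bound1': assumes "\<epsilon> > 0" shows "\<bar>stableG a \<delta> (real (Suc n) * \<epsilon>) x\<bar> \<le> K1 * \<epsilon> powr (-1/a)"
proof -
  have "\<bar>stableG a \<delta> (real (Suc n) * \<epsilon>) x\<bar> \<le> K1 * (real (Suc n) * \<epsilon>) powr (-1/a)"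
    using assms by (intro G_bound1) auto
  also have "(real (Suc n) * \<epsilon>) powr (-1/a) \<le> \<epsilon> powr (-1/a)"
    using assms a1 by (intro powr_mono2') (auto simp del: of_nat_Suc)
  hence "K1 * (real (Suc n) * \<epsilon>) powr (-1/a) \<le> K1 * \<epsilon> powr (-1/a)" using K1_nonneg by (intro mult_left_mono)
  finally show ?thesis .
qed

lemma R_repr:
  assumes e: "\<epsilon> > 0" and t: "t \<ge> 0"
  shows "stableR a \<delta> \<epsilon> t x = (\<Sum>n. pw (t/\<epsilon>) (Suc n) * stableG a \<delta> (real (Suc n) * \<epsilon>) x)"
    "summable (\<lambda>n. pw (t/\<epsilon>) (Suc n) * stableG a \<delta> (real (Suc n) * \<epsilon>) x)"
proof -
  define l where "l = t / \<epsilon>"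
  have l0: "l \<ge> 0" using e t by (simp add: l_def)
  have s0: "summable (\<lambda>n. pw l n * (if n = 0 then 0 else stableG a \<delta> (real n * \<epsilon>) x))"
  proof (rule pw_summable_bounded[OF l0])
    fix n show "\<bar>if n = 0 then 0 else stableG a \<delta> (real n * \<epsilon>) x\<bar> \<le> K1 * \<epsilon> powr (-1/a)"
      using G_bound1'[OF e, of "n - 1" x] K1_nonneg by (cases n) auto
  qed
  hence s1: "summable (\<lambda>n. pw l (Suc n) * stableG a \<delta> (real (Suc n) * \<epsilon>) x)"
    by (subst (asm) summable_Suc_iff[symmetric]) simp
  thus "summable (\<lambda>n. pw (t/\<epsilon>) (Suc n) * stableG a \<delta> (real (Suc n) * \<epsilon>) x)" by (simp add: l_def)
  have eq: "pw l (Suc n) * stableG a \<delta> (real (Suc n) * \<epsilon>) x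
      = exp (- t / \<epsilon>) * ((t / \<epsilon>) ^ Suc n / fact (Suc n) * stableG a \<delta> (real (Suc n) * \<epsilon>) x)" for n
    by (simp add: pw_def l_def)
  have s2: "summable (\<lambda>n. (t / \<epsilon>) ^ Suc n / fact (Suc n) * stableG a \<delta> (real (Suc n) * \<epsilon>) x)"
  proof -
    have h1: "summable (\<lambda>n. exp (t/\<epsilon>) * (pw l (Suc n) * stableG a \<delta> (real (Suc n) * \<epsilon>) x))"
      by (intro summable_mult s1)
    have h2: "(\<lambda>n. exp (t/\<epsilon>) * (pw l (Suc n) * stableG a \<delta> (real (Suc n) * \<epsilon>) x))
        = (\<lambda>n. (t / \<epsilon>) ^ Suc n / fact (Suc n) * stableG a \<delta> (real (Suc n) * \<epsilon>) x)"
    proof (rule ext)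
      fix n
      have ee: "exp (t/\<epsilon>) * exp (- l) = 1" by (simp add: l_def flip: exp_add)
      have "exp (t/\<epsilon>) * (pw l (Suc n) * stableG a \<delta> (real (Suc n) * \<epsilon>) x)
          = (exp (t/\<epsilon>) * exp (- l)) * (l ^ Suc n / fact (Suc n) * stableG a \<delta> (real (Suc n) * \<epsilon>) x)"
        unfolding pw_def by (simp only: mult_ac times_divide_eq_right times_divide_eq_left)
      also have "\<dots> = (t / \<epsilon>) ^ Suc n / fact (Suc n) * stableG a \<delta> (real (Suc n) * \<epsilon>) x"
        using ee by (simp only: mult_1_left l_def)
      finally show "exp (t/\<epsilon>) * (pw l (Suc n) * stableG a \<delta> (real (Suc n) * \<epsilon>) x)
          = (t / \<epsilon>) ^ Suc n / fact (Suc n) * stableG a \<delta> (real (Suc n) * \<epsilon>) x" .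
    qed
    show ?thesis using h1 unfolding h2 .
  qed
  show "stableR a \<delta> \<epsilon> t x = (\<Sum>n. pw (t/\<epsilon>) (Suc n) * stableG a \<delta> (real (Suc n) * \<epsilon>) x)"
  proof -
    have "stableR a \<delta> \<epsilon> t x = exp (- t / \<epsilon>) * (\<Sum>n. (t / \<epsilon>) ^ Suc n / fact (Suc n) * stableG a \<delta> (real (Suc n) * \<epsilon>) x)"
      by (simp add: stableR_def)
    also have "\<dots> = (\<Sum>n. exp (- t / \<epsilon>) * ((t / \<epsilon>) ^ Suc n / fact (Suc n) * stableG a \<delta> (real (Suc n) * \<epsilon>) x))"
      by (rule suminf_mult[OF s2, symmetric])
    also have "\<dots> = (\<Sum>n. pw l (Suc n) * stableG a \<delta> (real (Suc n) * \<epsilon>) x)"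
      by (simp only: eq)
    finally show ?thesis by (simp add: l_def)
  qed
qed

definition C2 where "C2 = 12 * pi * K2 * K1"

lemma part2:
  assumes e: "\<epsilon> > 0" and t: "t > 0"
  shows "(\<integral>\<^sup>+ x. ennreal ((stableR a \<delta> \<epsilon> t x)\<^sup>2) \<partial>lborel) \<le> ennreal (C2 * t powr (- 1 / a))"
proof -
  define l where "l = t / \<epsilon>"
  have l0: "l > 0" using e t by (simp add: l_def)
  define w where "w n = pw l (Suc n)" for n
  define A where "A n = K1 * (real (Suc n) * \<epsilon>) powr (-1/a)" for n
  have w0: "w n \<ge> 0" for n using pw_nonneg l0 by (simp add: w_def)
  have ws: "w sums (1 - pw l 0)" unfolding w_def using pw_sums[of l] by (subst sums_Suc_iff) simp
  have W1: "1 - pw l 0 \<le> 1" using pw_nonneg[of l 0] l0 by simp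
  have A0: "A n \<ge> 0" for n using K1_nonneg by (simp add: A_def)
  have AM: "A n \<le> K1 * \<epsilon> powr (-1/a)" for n
  proof -
    have "(real (Suc n) * \<epsilon>) powr (-1/a) \<le> \<epsilon> powr (-1/a)"
      using e a1 by (intro powr_mono2') (auto simp del: of_nat_Suc)
    thus ?thesis unfolding A_def using K1_nonneg by (intro mult_left_mono)
  qed
  have L: "(\<integral>\<^sup>+ x. ennreal ((stableR a \<delta> \<epsilon> t x)\<^sup>2) \<partial>lborel) \<le> ennreal (2 * pi * K2 * (\<Sum>n. w n * A n))"
  proof (rule series_L2[OF w0 sums_summable[OF ws] A0 AM K2_pos])
    fix x
    define b where "b n = stableG a \<delta> (real (Suc n) * \<epsilon>) x" for n
    have bM: "\<bar>b n\<bar> \<le> K1 * \<epsilon> powr (-1/a)" for n unfolding b_def by (rule G_bound1'[OF e])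
    have R: "stableR a \<delta> \<epsilon> t x = (\<Sum>n. w n * b n)"
      unfolding R_repr(1)[OF e less_imp_le[OF t]] w_def b_def l_def ..
    have "(stableR a \<delta> \<epsilon> t x)^2 \<le> (\<Sum>n. w n * (b n)^2)"
      unfolding R by (rule series_CS(3)[OF w0 ws W1 bM])
    also have "\<dots> \<le> (\<Sum>n. w n * Hf (A n) K2 x)"
    proof (rule suminf_le)
      fix n
      have "(b n)^2 \<le> Hf (A n) K2 x"
      proof (rule Hf_bound)
        show "\<bar>b n\<bar> \<le> A n" unfolding b_def A_def using e by (intro G_bound1) auto
        show "\<bar>x\<bar> * \<bar>b n\<bar> \<le> K2" unfolding b_def using e by (intro G_bound2) auto
      qed
      thus "w n * (b n)^2 \<le> w n * Hf (A n) K2 x" using w0[of n] by (intro mult_left_mono)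
    next
      show "summable (\<lambda>n. w n * (b n)^2)" by (rule series_CS(2)[OF w0 ws W1 bM])
      show "summable (\<lambda>n. w n * Hf (A n) K2 x)"
      proof (rule summable_comparison_test[OF _ summable_mult2[OF sums_summable[OF ws], of "(K1 * \<epsilon> powr (-1/a))^2"]])
        show "\<exists>N. \<forall>n\<ge>N. norm (w n * Hf (A n) K2 x) \<le> w n * (K1 * \<epsilon> powr (-1/a))^2"
        proof (intro exI allI impI)
          fix n
          have "Hf (A n) K2 x \<le> (K1 * \<epsilon> powr (-1/a))^2"
            using Hf_le[of "A n" K2 x] power_mono[OF AM[of n] A0[of n], of 2] by linarith
          thus "norm (w n * Hf (A n) K2 x) \<le> w n * (K1 * \<epsilon> powr (-1/a))^2"
            using w0[of n] Hf_nonneg[of "A n" K2 x] by (simp add: abs_mult mult_left_mono)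
        qed
      qed
    qed
    finally show "(stableR a \<delta> \<epsilon> t x)^2 \<le> (\<Sum>n. w n * Hf (A n) K2 x)" .
  qed
  have "(\<Sum>n. w n * A n) = K1 * \<epsilon> powr (-1/a) * (\<Sum>n. pw l (Suc n) * real (Suc n) powr (-(1/a)))"
  proof -
    have "(\<lambda>n. w n * A n) = (\<lambda>n. K1 * \<epsilon> powr (-1/a) * (pw l (Suc n) * real (Suc n) powr (-(1/a))))"
      by (rule ext) (simp add: w_def A_def powr_mult e del: of_nat_Suc)
    thus ?thesis using neg_moment_pw(1)[OF l0, of "1/a"] a1 by (simp add: suminf_mult)
  qed
  also have "\<dots> \<le> K1 * \<epsilon> powr (-1/a) * (6 * l powr (-(1/a)))"
    using neg_moment_pw(2)[OF l0, of "1/a"] a1 K1_nonneg by (intro mult_left_mono) auto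
  also have "\<dots> = 6 * K1 * t powr (-1/a)"
    using e t by (simp add: l_def powr_divide powr_minus field_simps)
  finally have S: "(\<Sum>n. w n * A n) \<le> 6 * K1 * t powr (-1/a)" .
  have "2 * pi * K2 * (\<Sum>n. w n * A n) \<le> 2 * pi * K2 * (6 * K1 * t powr (-1/a))"
    using S K2_pos by (intro mult_left_mono) auto
  also have "\<dots> = C2 * t powr (- 1 / a)" by (simp add: C2_def mult_ac)
  finally show ?thesis using L order_trans ennreal_leI by blast
qed

end



context stab
begin

definition AA :: "real \<Rightarrow> real \<Rightarrow> nat \<Rightarrow> real" where
  "AA \<epsilon> s n = (if n = 0 then K1 * s powr (-1/a) else
     min (K3 * \<bar>real n * \<epsilon> - s\<bar> * min (real n * \<epsilon>) s powr (-(a+1)/a))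
         (K1 * (real n * \<epsilon>) powr (-1/a) + K1 * s powr (-1/a)))"

definition TT :: "real \<Rightarrow> real \<Rightarrow> real" where
  "TT \<epsilon> s = (\<Sum>n. pw (s/\<epsilon>) n * AA \<epsilon> s n)"

definition EE :: "real \<Rightarrow> real \<Rightarrow> real \<Rightarrow> nat \<Rightarrow> real" where
  "EE \<epsilon> s x n = (if n = 0 then - stableG a \<delta> s x else stableG a \<delta> (real n * \<epsilon>) x - stableG a \<delta> s x)"

lemma AA_nonneg: "\<epsilon> > 0 \<Longrightarrow> s > 0 \<Longrightarrow> AA \<epsilon> s n \<ge> 0"
  unfolding AA_def using K1_nonneg K3_nonneg by auto

lemma AA_le: assumes "\<epsilon> > 0" "s > 0" shows "AA \<epsilon> s n \<le> K1 * \<epsilon> powr (-1/a) + K1 * s powr (-1/a)"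
proof (cases n)
  case 0 thus ?thesis using K1_nonneg by (simp add: AA_def)
next
  case (Suc m)
  have "(real n * \<epsilon>) powr (-1/a) \<le> \<epsilon> powr (-1/a)"
    using assms a1 Suc by (intro powr_mono2') (auto simp del: of_nat_Suc)
  hence "K1 * (real n * \<epsilon>) powr (-1/a) \<le> K1 * \<epsilon> powr (-1/a)" using K1_nonneg by (intro mult_left_mono)
  thus ?thesis using Suc by (simp add: AA_def)
qed

lemma EE_bound: assumes e: "\<epsilon> > 0" and s: "s > 0" shows "\<bar>EE \<epsilon> s x n\<bar> \<le> AA \<epsilon> s n"
proof (cases n)
  case 0 thus ?thesis using G_bound1[OF s] by (simp add: EE_def AA_def)
next
  case (Suc m)
  have u: "real n * \<epsilon> > 0" using Suc e by (simp del: of_nat_Suc)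
  have "\<bar>stableG a \<delta> (real n * \<epsilon>) x - stableG a \<delta> s x\<bar> \<le> K3 * \<bar>real n * \<epsilon> - s\<bar> * min (real n * \<epsilon>) s powr (-(a+1)/a)"
    by (rule G_bound3[OF u s])
  moreover have "\<bar>stableG a \<delta> (real n * \<epsilon>) x - stableG a \<delta> s x\<bar> \<le> K1 * (real n * \<epsilon>) powr (-1/a) + K1 * s powr (-1/a)"
    using G_bound1[OF u, of x] G_bound1[OF s, of x] by linarith
  ultimately show ?thesis using Suc by (simp add: EE_def AA_def)
qed

lemma EE_bound2: assumes e: "\<epsilon> > 0" and s: "s > 0" shows "\<bar>x\<bar> * \<bar>EE \<epsilon> s x n\<bar> \<le> 2 * K2"
proof (cases n)
  case 0 thus ?thesis using G_bound2[OF s, of x] K2_pos by (simp add: EE_def)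
next
  case (Suc m)
  have u: "real n * \<epsilon> > 0" using Suc e by (simp del: of_nat_Suc)
  have "\<bar>x\<bar> * \<bar>stableG a \<delta> (real n * \<epsilon>) x - stableG a \<delta> s x\<bar>
     \<le> \<bar>x\<bar> * \<bar>stableG a \<delta> (real n * \<epsilon>) x\<bar> + \<bar>x\<bar> * \<bar>stableG a \<delta> s x\<bar>"
    unfolding distrib_left[symmetric] by (intro mult_left_mono abs_triangle_ineq4) auto
  also have "\<dots> \<le> K2 + K2" using G_bound2[OF u, of x] G_bound2[OF s, of x] by (intro add_mono)
  finally show ?thesis using Suc by (simp add: EE_def)
qed

lemma RG_repr:
  assumes e: "\<epsilon> > 0" and s: "s > 0"
  shows "(\<lambda>n. pw (s/\<epsilon>) n * EE \<epsilon> s x n) sums (stableR a \<delta> \<epsilon> s x - stableG a \<delta> s x)"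
proof -
  define l where "l = s / \<epsilon>"
  define G where "G = stableG a \<delta> s x"
  have s1: "(\<lambda>n. pw l (Suc n) * stableG a \<delta> (real (Suc n) * \<epsilon>) x) sums stableR a \<delta> \<epsilon> s x"
    using R_repr[OF e less_imp_le[OF s], of x] by (simp add: l_def sums_iff)
  have s2: "(\<lambda>n. pw l (Suc n) * G) sums ((1 - pw l 0) * G)"
    by (intro sums_mult2) (use pw_sums[of l] in \<open>subst sums_Suc_iff; simp\<close>)
  have "(\<lambda>n. pw l (Suc n) * EE \<epsilon> s x (Suc n)) sums (stableR a \<delta> \<epsilon> s x - (1 - pw l 0) * G)"
  proof -
    have "(\<lambda>n. pw l (Suc n) * stableG a \<delta> (real (Suc n) * \<epsilon>) x - pw l (Suc n) * G) sums (stableR a \<delta> \<epsilon> s x - (1 - pw l 0) * G)"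
      by (intro sums_diff s1 s2)
    thus ?thesis by (simp add: EE_def G_def right_diff_distrib del: of_nat_Suc)
  qed
  hence h: "(\<lambda>n. pw l n * EE \<epsilon> s x n) sums (stableR a \<delta> \<epsilon> s x - (1 - pw l 0) * G + pw l 0 * EE \<epsilon> s x 0)"
    by (subst (asm) sums_Suc_iff)
  have eqv: "stableR a \<delta> \<epsilon> s x - (1 - pw l 0) * G + pw l 0 * EE \<epsilon> s x 0 = stableR a \<delta> \<epsilon> s x - G"
    by (simp add: EE_def G_def algebra_simps)
  from h have "(\<lambda>n. pw l n * EE \<epsilon> s x n) sums (stableR a \<delta> \<epsilon> s x - G)" unfolding eqv .
  thus ?thesis by (simp add: l_def G_def)
qed

lemma inner_bound:
  assumes e: "\<epsilon> > 0" and s: "s > 0"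
  shows "(\<integral>\<^sup>+ x. ennreal ((stableR a \<delta> \<epsilon> s x - stableG a \<delta> s x)\<^sup>2) \<partial>lborel) \<le> ennreal (2 * pi * (2 * K2) * TT \<epsilon> s)"
  unfolding TT_def
proof (rule series_L2[OF pw_nonneg sums_summable[OF pw_sums] AA_nonneg[OF e s] AA_le[OF e s]])
  show "0 \<le> s / \<epsilon>" using e s by simp
  show "0 < 2 * K2" using K2_pos by simp
  fix x
  define M where "M = K1 * \<epsilon> powr (-1/a) + K1 * s powr (-1/a)"
  have bM: "\<bar>EE \<epsilon> s x n\<bar> \<le> M" for n using EE_bound[OF e s] AA_le[OF e s] unfolding M_def by (meson order_trans)
  have w0: "pw (s/\<epsilon>) n \<ge> 0" for n using e s by (intro pw_nonneg) simp
  have "(stableR a \<delta> \<epsilon> s x - stableG a \<delta> s x)^2 = (\<Sum>n. pw (s/\<epsilon>) n * EE \<epsilon> s x n)^2"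
    using RG_repr[OF e s, of x] by (simp add: sums_iff)
  also have "\<dots> \<le> (\<Sum>n. pw (s/\<epsilon>) n * (EE \<epsilon> s x n)^2)"
    by (rule series_CS(3)[OF w0 pw_sums order_refl bM])
  also have "\<dots> \<le> (\<Sum>n. pw (s/\<epsilon>) n * Hf (AA \<epsilon> s n) (2 * K2) x)"
  proof (rule suminf_le)
    fix n
    have "(EE \<epsilon> s x n)^2 \<le> Hf (AA \<epsilon> s n) (2 * K2) x"
      by (intro Hf_bound EE_bound[OF e s] EE_bound2[OF e s])
    thus "pw (s/\<epsilon>) n * (EE \<epsilon> s x n)^2 \<le> pw (s/\<epsilon>) n * Hf (AA \<epsilon> s n) (2 * K2) x"
      using w0[of n] by (intro mult_left_mono)
  next
    show "summable (\<lambda>n. pw (s/\<epsilon>) n * (EE \<epsilon> s x n)^2)" by (rule series_CS(2)[OF w0 pw_sums order_refl bM])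
    show "summable (\<lambda>n. pw (s/\<epsilon>) n * Hf (AA \<epsilon> s n) (2 * K2) x)"
    proof (rule pw_summable_bounded)
      show "0 \<le> s/\<epsilon>" using e s by simp
      fix n
      have "Hf (AA \<epsilon> s n) (2 * K2) x \<le> M^2"
        using Hf_le[of "AA \<epsilon> s n" "2*K2" x] power_mono[OF AA_le[OF e s, of n] AA_nonneg[OF e s, of n], of 2]
        unfolding M_def by linarith
      thus "\<bar>Hf (AA \<epsilon> s n) (2 * K2) x\<bar> \<le> M^2" using Hf_nonneg[of "AA \<epsilon> s n" "2*K2" x] by simp
    qed
  qed
  finally show "(stableR a \<delta> \<epsilon> s x - stableG a \<delta> s x)^2 \<le> (\<Sum>n. pw (s/\<epsilon>) n * Hf (AA \<epsilon> s n) (2 * K2) x)" .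
qed

end



lemma amgm_abs: assumes "h > 0" shows "\<bar>y::real\<bar> \<le> (y^2 / h + h) / 2"
proof -
  have "0 \<le> (\<bar>y\<bar> - h)^2" by simp
  hence "2 * h * \<bar>y\<bar> \<le> y^2 + h^2" by (simp add: power2_eq_square algebra_simps)
  thus ?thesis using assms by (simp add: field_simps power2_eq_square)
qed

lemma pw0_le: assumes "l > 0" shows "pw l 0 \<le> 1 / l"
proof -
  have "1 + l \<le> exp l" by (rule exp_ge_add_one_self)
  hence "l \<le> exp l" by linarith
  thus ?thesis using assms by (simp add: pw_def exp_minus field_simps)
qed

context stab
begin

lemma TT_summable: "\<epsilon> > 0 \<Longrightarrow> s > 0 \<Longrightarrow> summable (\<lambda>n. pw (s/\<epsilon>) n * AA \<epsilon> s n)"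
  by (rule pw_summable_bounded[of _ _ "K1 * \<epsilon> powr (-1/a) + K1 * s powr (-1/a)"])
     (use AA_le AA_nonneg in \<open>auto simp: abs_of_nonneg\<close>)

lemma TT_bound1:
  assumes e: "\<epsilon> > 0" and s: "s > 0"
  shows "TT \<epsilon> s \<le> 7 * K1 * s powr (-1/a)"
proof -
  define l where "l = s / \<epsilon>"
  have l: "l > 0" using e s by (simp add: l_def)
  define v where "v n = (if n = 0 then 0 else K1 * (real n * \<epsilon>) powr (-1/a))" for n
  define Q where "Q = (\<Sum>n. pw l (Suc n) * real (Suc n) powr (-(1/a)))"
  have Qs: "(\<lambda>n. pw l (Suc n) * real (Suc n) powr (-(1/a))) sums Q"
    unfolding Q_def using neg_moment_pw(1)[OF l, of "1/a"] a1 by (simp add: summable_sums)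
  have Qle: "Q \<le> 6 * l powr (-(1/a))" unfolding Q_def using neg_moment_pw(2)[OF l, of "1/a"] a1 by simp
  have "(\<lambda>n. pw l (Suc n) * v (Suc n)) sums (K1 * \<epsilon> powr (-1/a) * Q)"
  proof -
    have "(\<lambda>n. K1 * \<epsilon> powr (-1/a) * (pw l (Suc n) * real (Suc n) powr (-(1/a)))) sums (K1 * \<epsilon> powr (-1/a) * Q)"
      by (intro sums_mult Qs)
    moreover have "(\<lambda>n. K1 * \<epsilon> powr (-1/a) * (pw l (Suc n) * real (Suc n) powr (-(1/a)))) = (\<lambda>n. pw l (Suc n) * v (Suc n))"
      by (rule ext) (simp add: v_def powr_mult e del: of_nat_Suc)
    ultimately show ?thesis by simp
  qed
  hence vs: "(\<lambda>n. pw l n * v n) sums (K1 * \<epsilon> powr (-1/a) * Q)"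
    by (subst (asm) sums_Suc_iff) (simp add: v_def)
  have gs: "(\<lambda>n. pw l n * (K1 * s powr (-1/a) + v n)) sums (K1 * s powr (-1/a) * 1 + K1 * \<epsilon> powr (-1/a) * Q)"
  proof -
    have "(\<lambda>n. K1 * s powr (-1/a) * pw l n + pw l n * v n) sums (K1 * s powr (-1/a) * 1 + K1 * \<epsilon> powr (-1/a) * Q)"
      by (intro sums_add sums_mult pw_sums vs)
    thus ?thesis by (simp add: algebra_simps)
  qed
  have "TT \<epsilon> s \<le> K1 * s powr (-1/a) * 1 + K1 * \<epsilon> powr (-1/a) * Q"
    unfolding TT_def l_def[symmetric]
  proof (rule sums_le[OF _ summable_sums gs])
    show "summable (\<lambda>n. pw l n * AA \<epsilon> s n)" using TT_summable[OF e s] by (simp add: l_def)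
    fix n
    have "AA \<epsilon> s n \<le> K1 * s powr (-1/a) + v n"
      using AA_le[OF e s, of n] K1_nonneg by (auto simp: AA_def v_def)
    thus "pw l n * AA \<epsilon> s n \<le> pw l n * (K1 * s powr (-1/a) + v n)"
      using pw_nonneg[of l n] l by (intro mult_left_mono) auto
  qed
  also have "K1 * \<epsilon> powr (-1/a) * Q \<le> K1 * \<epsilon> powr (-1/a) * (6 * l powr (-(1/a)))"
    using Qle K1_nonneg by (intro mult_left_mono) auto
  also have "K1 * \<epsilon> powr (-1/a) * (6 * l powr (-(1/a))) = 6 * K1 * s powr (-1/a)"
    using e s by (simp add: l_def powr_divide powr_minus field_simps)
  finally show ?thesis by simp
qed

lemma TT_bound2:
  assumes e: "\<epsilon> > 0" and eta: "\<eta> > 0" "\<eta> \<le> s" "s \<le> t"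
  shows "TT \<epsilon> s \<le> K1 * \<eta> powr (-1/a) / \<eta> * \<epsilon>
      + K3 * (\<eta>/2) powr (-(a+1)/a) * ((t + 1) / 2) * sqrt \<epsilon>
      + 8 * K1 / \<eta> * (\<epsilon> * \<epsilon> powr (-1/a))"
proof -
  have s: "s > 0" using eta by simp
  define l where "l = s / \<epsilon>"
  have l: "l > 0" using e s by (simp add: l_def)
  define c2 where "c2 = K3 * (s/2) powr (-(a+1)/a)"
  define c3 where "c3 = 8 * K1 * \<epsilon> powr (-1/a) / l^2"
  have c2: "c2 \<ge> 0" unfolding c2_def using K3_nonneg by simp
  have c3: "c3 \<ge> 0" unfolding c3_def using K1_nonneg by simp
  have se: "sqrt \<epsilon> > 0" using e by simp
  define g where "g n = (if n = 0 then K1 * s powr (-1/a) else 0)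
      + c2 * ((\<epsilon>^2 * (real n - l)^2) / sqrt \<epsilon> + sqrt \<epsilon>) / 2 + c3 * (real n - l)^2" for n
  have pt: "AA \<epsilon> s n \<le> g n" for n
  proof (cases "n = 0")
    case True
    have "0 \<le> c2 * ((\<epsilon>^2 * (real n - l)^2) / sqrt \<epsilon> + sqrt \<epsilon>) / 2" using c2 se by simp
    moreover have "0 \<le> c3 * (real n - l)^2" using c3 by simp
    ultimately show ?thesis using True by (simp add: AA_def g_def)
  next
    case False
    have ne: "real n * \<epsilon> \<ge> \<epsilon>" using False e by simp
    show ?thesis
    proof (cases "2 * (real n * \<epsilon>) \<ge> s")
      case True
      have m: "min (real n * \<epsilon>) s \<ge> s / 2" using True s by simp
      have "min (real n * \<epsilon>) s powr (-(a+1)/a) \<le> (s/2) powr (-(a+1)/a)"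
        using m s a1 by (intro powr_mono2') (auto simp: divide_nonpos_pos)
      hence "K3 * \<bar>real n * \<epsilon> - s\<bar> * min (real n * \<epsilon>) s powr (-(a+1)/a) \<le> K3 * \<bar>real n * \<epsilon> - s\<bar> * (s/2) powr (-(a+1)/a)"
        by (rule mult_left_mono) (use K3_nonneg in simp)
      moreover have "AA \<epsilon> s n \<le> K3 * \<bar>real n * \<epsilon> - s\<bar> * min (real n * \<epsilon>) s powr (-(a+1)/a)"
        using False by (simp add: AA_def)
      ultimately have "AA \<epsilon> s n \<le> c2 * \<bar>real n * \<epsilon> - s\<bar>" by (simp add: c2_def mult_ac)
      also have "\<bar>real n * \<epsilon> - s\<bar> \<le> ((real n * \<epsilon> - s)^2 / sqrt \<epsilon> + sqrt \<epsilon>) / 2"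
        by (rule amgm_abs[OF se])
      also have "(real n * \<epsilon> - s)^2 = \<epsilon>^2 * (real n - l)^2"
        using e by (simp add: l_def power2_eq_square field_simps)
      finally have "AA \<epsilon> s n \<le> c2 * ((\<epsilon>^2 * (real n - l)^2) / sqrt \<epsilon> + sqrt \<epsilon>) / 2"
        using c2 by (simp add: mult_left_mono)
      moreover have "0 \<le> c3 * (real n - l)^2" using c3 by simp
      moreover have "g n = c2 * ((\<epsilon>^2 * (real n - l)^2) / sqrt \<epsilon> + sqrt \<epsilon>) / 2 + c3 * (real n - l)^2"
        using False by (simp add: g_def)
      ultimately show ?thesis by linarith
    next
      case False2: False
      have "K1 * (real n * \<epsilon>) powr (-1/a) \<le> K1 * \<epsilon> powr (-1/a)"
        using ne e a1 K1_nonneg by (intro mult_left_mono powr_mono2') auto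
      moreover have "K1 * s powr (-1/a) \<le> K1 * \<epsilon> powr (-1/a)"
      proof -
        have "\<epsilon> \<le> s" using ne False2 e by linarith
        thus ?thesis using e a1 K1_nonneg by (intro mult_left_mono powr_mono2') auto
      qed
      ultimately have "AA \<epsilon> s n \<le> 2 * K1 * \<epsilon> powr (-1/a)" using False by (simp add: AA_def)
      also have "\<dots> \<le> c3 * (real n - l)^2"
      proof -
        have "l - real n \<ge> l / 2" using False2 e by (simp add: l_def field_simps)
        hence "(l/2)^2 \<le> (l - real n)^2" using l by (intro power_mono) auto
        hence "(l/2)^2 \<le> (real n - l)^2" by (simp add: power2_commute)
        hence "1 \<le> 4 * (real n - l)^2 / l^2" using l by (simp add: field_simps power2_eq_square)
        hence "2 * K1 * \<epsilon> powr (-1/a) * 1 \<le> 2 * K1 * \<epsilon> powr (-1/a) * (4 * (real n - l)^2 / l^2)"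
          using K1_nonneg by (intro mult_left_mono) auto
        thus ?thesis by (simp add: c3_def)
      qed
      finally have h: "AA \<epsilon> s n \<le> c3 * (real n - l)^2" .
      have "0 \<le> c2 * ((\<epsilon>^2 * (real n - l)^2) / sqrt \<epsilon> + sqrt \<epsilon>) / 2" using c2 se by simp
      moreover have "g n = c2 * ((\<epsilon>^2 * (real n - l)^2) / sqrt \<epsilon> + sqrt \<epsilon>) / 2 + c3 * (real n - l)^2"
        using False by (simp add: g_def)
      ultimately show ?thesis using h by linarith
    qed
  qed
  have gs: "(\<lambda>n. pw l n * g n) sums (pw l 0 * (K1 * s powr (-1/a)) + (c2 / 2 * (\<epsilon>^2 / sqrt \<epsilon>) * l + c2 / 2 * sqrt \<epsilon> * 1) + c3 * l)"
  proof -
    have sa: "(\<lambda>n. if n = 0 then pw l 0 * (K1 * s powr (-1/a)) else 0) sums (pw l 0 * (K1 * s powr (-1/a)))"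
      using sums_single[of 0 "\<lambda>_. pw l 0 * (K1 * s powr (-1/a))"] by simp
    have "(\<lambda>n. (if n = 0 then pw l 0 * (K1 * s powr (-1/a)) else 0)
        + (c2 / 2 * (\<epsilon>^2 / sqrt \<epsilon>) * (pw l n * (real n - l)^2) + c2 / 2 * sqrt \<epsilon> * pw l n)
        + c3 * (pw l n * (real n - l)^2))
      sums (pw l 0 * (K1 * s powr (-1/a)) + (c2 / 2 * (\<epsilon>^2 / sqrt \<epsilon>) * l + c2 / 2 * sqrt \<epsilon> * 1) + c3 * l)"
      by (intro sums_add sums_mult sa pw_var pw_sums)
    moreover have "(\<lambda>n. (if n = 0 then pw l 0 * (K1 * s powr (-1/a)) else 0)
        + (c2 / 2 * (\<epsilon>^2 / sqrt \<epsilon>) * (pw l n * (real n - l)^2) + c2 / 2 * sqrt \<epsilon> * pw l n)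
        + c3 * (pw l n * (real n - l)^2)) = (\<lambda>n. pw l n * g n)"
      by (rule ext) (simp add: g_def algebra_simps add_divide_distrib)
    ultimately show ?thesis by simp
  qed
  have "TT \<epsilon> s \<le> pw l 0 * (K1 * s powr (-1/a)) + (c2 / 2 * (\<epsilon>^2 / sqrt \<epsilon>) * l + c2 / 2 * sqrt \<epsilon> * 1) + c3 * l"
    unfolding TT_def l_def[symmetric]
  proof (rule sums_le[OF _ summable_sums gs])
    show "summable (\<lambda>n. pw l n * AA \<epsilon> s n)" using TT_summable[OF e s] by (simp add: l_def)
    fix n show "pw l n * AA \<epsilon> s n \<le> pw l n * g n"
      using pw_nonneg[of l n] l pt[of n] by (intro mult_left_mono) auto
  qed
  also have "pw l 0 * (K1 * s powr (-1/a)) \<le> K1 * \<eta> powr (-1/a) / \<eta> * \<epsilon>"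
  proof -
    have hA: "pw l 0 \<le> \<epsilon> / \<eta>"
    proof -
      have "pw l 0 \<le> 1 / l" by (rule pw0_le[OF l])
      also have "1 / l = \<epsilon> / s" using e s by (simp add: l_def)
      also have "\<epsilon> / s \<le> \<epsilon> / \<eta>" using e eta by (intro divide_left_mono) auto
      finally show ?thesis .
    qed
    have hB: "K1 * s powr (-1/a) \<le> K1 * \<eta> powr (-1/a)"
      using eta a1 K1_nonneg by (intro mult_left_mono powr_mono2') auto
    have "pw l 0 * (K1 * s powr (-1/a)) \<le> \<epsilon> / \<eta> * (K1 * \<eta> powr (-1/a))"
      by (rule mult_mono[OF hA hB]) (use e eta K1_nonneg in auto)
    thus ?thesis by (simp add: field_simps)
  qed
  also have "c2 / 2 * (\<epsilon>^2 / sqrt \<epsilon>) * l + c2 / 2 * sqrt \<epsilon> * 1 \<le> K3 * (\<eta>/2) powr (-(a+1)/a) * ((t + 1) / 2) * sqrt \<epsilon>"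
  proof -
    have e1: "\<epsilon>^2 / sqrt \<epsilon> * l = s * sqrt \<epsilon>"
      using e s by (simp add: l_def field_simps power2_eq_square real_sqrt_mult[symmetric] flip: real_sqrt_mult)
    have "c2 / 2 * (\<epsilon>^2 / sqrt \<epsilon>) * l + c2 / 2 * sqrt \<epsilon> * 1 = c2 / 2 * (\<epsilon>^2 / sqrt \<epsilon> * l) + c2 / 2 * sqrt \<epsilon>"
      by (simp only: mult.assoc mult_1_right)
    also have "\<dots> = c2 / 2 * (s * sqrt \<epsilon>) + c2 / 2 * sqrt \<epsilon>" unfolding e1 ..
    also have "\<dots> = c2 * ((s + 1) / 2) * sqrt \<epsilon>" by (simp add: algebra_simps add_divide_distrib)
    also have "\<dots> \<le> K3 * (\<eta>/2) powr (-(a+1)/a) * ((t + 1) / 2) * sqrt \<epsilon>"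
    proof (intro mult_right_mono mult_mono)
      show "c2 \<le> K3 * (\<eta>/2) powr (-(a+1)/a)"
        unfolding c2_def using eta a1 K3_nonneg by (intro mult_left_mono powr_mono2') (auto simp: divide_nonpos_pos)
    qed (use eta e K3_nonneg in auto)
    finally show ?thesis .
  qed
  also have "c3 * l \<le> 8 * K1 / \<eta> * (\<epsilon> * \<epsilon> powr (-1/a))"
  proof -
    have "c3 * l = 8 * K1 * (\<epsilon> * \<epsilon> powr (-1/a)) / s"
      using e s by (simp add: c3_def l_def field_simps power2_eq_square)
    also have "\<dots> \<le> 8 * K1 * (\<epsilon> * \<epsilon> powr (-1/a)) / \<eta>"
      using eta e K1_nonneg by (intro divide_left_mono) auto
    finally show ?thesis by simp
  qed
  finally show ?thesis by simp
qed

end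



lemma int_powr0:
  assumes eta: "\<eta> > 0" and p: "0 < p" "p < 1"
  shows "(\<integral>\<^sup>+s. ennreal (s powr (-p)) * indicator {0..\<eta>} s \<partial>lborel) = ennreal (\<eta> powr (1 - p) / (1 - p))"
proof -
  have "((\<lambda>x. x powr (-p)) has_integral (\<eta> powr (-p + 1) / (-p + 1))) {0..\<eta>}"
    using p eta by (intro has_integral_powr_from_0) auto
  hence hi: "((\<lambda>x. if x \<in> {0..\<eta>} then x powr (-p) else 0) has_integral (\<eta> powr (1 - p) / (1 - p))) UNIV"
    by (subst has_integral_restrict_UNIV) (simp add: add.commute)
  have "(\<integral>\<^sup>+s. ennreal (if s \<in> {0..\<eta>} then s powr (-p) else 0) \<partial>lborel) = ennreal (\<eta> powr (1 - p) / (1 - p))"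
    by (rule nn_integral_has_integral_lborel[OF _ _ hi]) auto
  moreover have "(\<lambda>s. ennreal (if s \<in> {0..\<eta>} then s powr (-p) else 0)) = (\<lambda>s. ennreal (s powr (-p)) * indicator {0..\<eta>} s)"
    by (rule ext) (simp add: indicator_def)
  ultimately show ?thesis by simp
qed

context stab
begin

lemma part1:
  assumes t: "t > 0"
  shows "((\<lambda>\<epsilon>. \<integral>\<^sup>+ s\<in>{0..t}. (\<integral>\<^sup>+ x. ennreal ((stableR a \<delta> \<epsilon> s x - stableG a \<delta> s x)\<^sup>2) \<partial>lborel) \<partial>lborel)
              \<longlongrightarrow> 0) (at_right 0)"
proof (rule order_tendstoI, goal_cases)
  case (1 z) thus ?case by simp
next
  case (2 e)
  hence e: "0 < e" .
  define I where "I \<epsilon> s = (\<integral>\<^sup>+ x. ennreal ((stableR a \<delta> \<epsilon> s x - stableG a \<delta> s x)\<^sup>2) \<partial>lborel)" for \<epsilon> s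
  define C0 where "C0 = 2 * pi * (2 * K2)"
  have C0: "C0 > 0" using K2_pos by (simp add: C0_def)
  define q where "q = 1 - 1/a"
  have q: "0 < q" "q < 1" using a1 by (auto simp: q_def)
  define P where "P = C0 * (7 * K1)"
  have P: "P \<ge> 0" using C0 K1_nonneg by (simp add: P_def)
  obtain r where r: "0 < r" "ennreal r \<le> e"
  proof (cases "e = top")
    case True thus ?thesis using that[of 1] by simp
  next
    case False thus ?thesis using that[of "enn2real e"] e
      by (simp add: enn2real_positive_iff less_top)
  qed
  have "((\<lambda>\<eta>. P * (\<eta> powr q / q)) \<longlongrightarrow> P * (0 / q)) (at_right 0)"
    using q by (intro tendsto_intros tendsto_zero_powrI) (auto simp: eventually_at_filter intro: tendsto_ident_at)
  hence "eventually (\<lambda>\<eta>. P * (\<eta> powr q / q) < r / 2) (at_right 0)"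
    using r by (intro order_tendstoD) auto
  moreover have "eventually (\<lambda>\<eta>. \<eta> < t) (at_right (0::real))"
    unfolding eventually_at_right_field using t by blast
  ultimately have "eventually (\<lambda>\<eta>. P * (\<eta> powr q / q) < r / 2 \<and> \<eta> < t) (at_right 0)"
    by eventually_elim auto
  then obtain b where b: "b > 0" "\<forall>y>0. y < b \<longrightarrow> P * (y powr q / q) < r / 2 \<and> y < t"
    unfolding eventually_at_right_field by blast
  define \<eta> where "\<eta> = b / 2"
  have "\<eta> > 0" "\<eta> < b" using b(1) by (simp_all add: \<eta>_def)
  hence "P * (\<eta> powr q / q) < r / 2 \<and> \<eta> < t" using b(2) by blast
  hence eta: "\<eta> > 0" "\<eta> < t" "P * (\<eta> powr q / q) < r / 2" using \<open>\<eta> > 0\<close> by simp_all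
  define \<beta> where "\<beta> \<epsilon> = K1 * \<eta> powr (-1/a) / \<eta> * \<epsilon>
      + K3 * (\<eta>/2) powr (-(a+1)/a) * ((t + 1) / 2) * sqrt \<epsilon>
      + 8 * K1 / \<eta> * (\<epsilon> * \<epsilon> powr (-1/a))" for \<epsilon>
  have pq: "((\<lambda>\<epsilon>::real. \<epsilon> * \<epsilon> powr (-1/a)) \<longlongrightarrow> 0) (at_right 0)"
  proof -
    have "((\<lambda>\<epsilon>::real. \<epsilon> powr q) \<longlongrightarrow> 0) (at_right 0)"
      using q by (intro tendsto_zero_powrI) (auto simp: eventually_at_filter intro: tendsto_ident_at)
    moreover have "eventually (\<lambda>\<epsilon>::real. \<epsilon> powr q = \<epsilon> * \<epsilon> powr (-1/a)) (at_right 0)"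
    proof -
      have "eventually (\<lambda>\<epsilon>::real. \<epsilon> > 0) (at_right 0)" by (simp add: eventually_at_filter)
      thus ?thesis
      proof eventually_elim
        case (elim \<epsilon>)
        have "\<epsilon> powr q = \<epsilon> powr (1 + (-1/a))" by (simp add: q_def)
        also have "\<dots> = \<epsilon> powr 1 * \<epsilon> powr (-1/a)" by (rule powr_add)
        finally show ?case using elim by simp
      qed
    qed
    ultimately show ?thesis by (rule Lim_transform_eventually)
  qed
  have "((\<lambda>\<epsilon>. C0 * t * \<beta> \<epsilon>) \<longlongrightarrow> C0 * t * (K1 * \<eta> powr (-1/a) / \<eta> * 0
      + K3 * (\<eta>/2) powr (-(a+1)/a) * ((t + 1) / 2) * sqrt 0 + 8 * K1 / \<eta> * 0)) (at_right 0)"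
    unfolding \<beta>_def by (intro tendsto_intros pq) (auto intro: tendsto_ident_at)
  hence "eventually (\<lambda>\<epsilon>. C0 * t * \<beta> \<epsilon> < r / 2) (at_right 0)"
    using r by (intro order_tendstoD) auto
  moreover have "eventually (\<lambda>\<epsilon>::real. \<epsilon> > 0) (at_right 0)" by (simp add: eventually_at_filter)
  ultimately have "eventually (\<lambda>\<epsilon>. (\<integral>\<^sup>+ s\<in>{0..t}. I \<epsilon> s \<partial>lborel) < e) (at_right 0)"
  proof eventually_elim
    case (elim \<epsilon>)
    hence ep: "\<epsilon> > 0" by simp
    have "(\<integral>\<^sup>+ s\<in>{0..t}. I \<epsilon> s \<partial>lborel)
        \<le> (\<integral>\<^sup>+ s. ennreal P * (ennreal (s powr (-1/a)) * indicator {0..\<eta>} s) + ennreal (C0 * \<beta> \<epsilon>) * indicator {0..t} s \<partial>lborel)"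
    proof (rule nn_integral_mono_AE)
      show "AE s in lborel. I \<epsilon> s * indicator {0..t} s
          \<le> ennreal P * (ennreal (s powr (-1/a)) * indicator {0..\<eta>} s) + ennreal (C0 * \<beta> \<epsilon>) * indicator {0..t} s"
        using AE_lborel_singleton[of 0]
      proof eventually_elim
        case (elim s)
        show ?case
        proof (cases "s \<in> {0..t}")
          case False thus ?thesis by simp
        next
          case True
          hence s: "s > 0" "s \<le> t" using elim by auto
          have Ib: "I \<epsilon> s \<le> ennreal (C0 * TT \<epsilon> s)"
            unfolding I_def C0_def by (rule inner_bound[OF ep s(1)])
          show ?thesis
          proof (cases "s \<le> \<eta>")
            case True
            have "C0 * TT \<epsilon> s \<le> C0 * (7 * K1 * s powr (-1/a))"
              by (rule mult_left_mono[OF TT_bound1[OF ep s(1)]]) (use C0 in simp)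
            hence "I \<epsilon> s \<le> ennreal (C0 * (7 * K1 * s powr (-1/a)))"
              by (rule order_trans[OF Ib ennreal_leI])
            also have "\<dots> = ennreal (P * s powr (-1/a))" by (simp add: P_def mult_ac)
            also have "\<dots> = ennreal P * ennreal (s powr (-1/a))" by (rule ennreal_mult[OF P powr_ge_zero])
            also have "\<dots> = ennreal P * (ennreal (s powr (-1/a)) * indicator {0..\<eta>} s)"
              using True s by (simp add: indicator_def)
            finally show ?thesis using \<open>s \<in> {0..t}\<close> by (simp add: add_increasing2)
          next
            case False
            have "TT \<epsilon> s \<le> \<beta> \<epsilon>" unfolding \<beta>_def
              by (rule TT_bound2[OF ep eta(1) _ s(2)]) (use False in simp)
            hence "C0 * TT \<epsilon> s \<le> C0 * \<beta> \<epsilon>"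
              by (rule mult_left_mono) (use C0 in simp)
            hence "I \<epsilon> s \<le> ennreal (C0 * \<beta> \<epsilon>)"
              by (rule order_trans[OF Ib ennreal_leI])
            thus ?thesis using \<open>s \<in> {0..t}\<close> by (simp add: add_increasing)
          qed
        qed
      qed
    qed
    also have "\<dots> = ennreal P * (\<integral>\<^sup>+ s. ennreal (s powr (-1/a)) * indicator {0..\<eta>} s \<partial>lborel)
        + ennreal (C0 * \<beta> \<epsilon>) * emeasure lborel {0..t}"
      by (subst nn_integral_add) (auto simp: nn_integral_cmult nn_integral_cmult_indicator)
    also have "\<dots> = ennreal (P * (\<eta> powr q / q) + C0 * \<beta> \<epsilon> * t)"
    proof -
      have "(\<integral>\<^sup>+ s. ennreal (s powr (-1/a)) * indicator {0..\<eta>} s \<partial>lborel) = ennreal (\<eta> powr q / q)"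
        using int_powr0[OF eta(1), of "1/a"] a1 by (simp add: q_def)
      moreover have "C0 * \<beta> \<epsilon> \<ge> 0"
        unfolding \<beta>_def using C0 K1_nonneg K3_nonneg eta ep by (intro mult_nonneg_nonneg add_nonneg_nonneg) auto
      moreover have "emeasure lborel {0..t} = ennreal t" using t by simp
      moreover have "ennreal (P * (\<eta> powr q / q) + C0 * \<beta> \<epsilon> * t) = ennreal (P * (\<eta> powr q / q)) + ennreal (C0 * \<beta> \<epsilon> * t)"
        using P q t \<open>C0 * \<beta> \<epsilon> \<ge> 0\<close> by (intro ennreal_plus) auto
      moreover have "ennreal (P * (\<eta> powr q / q)) = ennreal P * ennreal (\<eta> powr q / q)"
        using P q by (intro ennreal_mult) auto
      moreover have "ennreal (C0 * \<beta> \<epsilon> * t) = ennreal (C0 * \<beta> \<epsilon>) * ennreal t"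
        using t \<open>C0 * \<beta> \<epsilon> \<ge> 0\<close> by (intro ennreal_mult) auto
      ultimately show ?thesis by simp
    qed
    also have "\<dots> < ennreal r"
    proof (rule ennreal_lessI[OF r(1)])
      have "C0 * \<beta> \<epsilon> * t = C0 * t * \<beta> \<epsilon>" by (simp add: mult_ac)
      moreover have "C0 * t * \<beta> \<epsilon> < r / 2" using elim by simp
      ultimately show "P * (\<eta> powr q / q) + C0 * \<beta> \<epsilon> * t < r" using eta(3) by linarith
    qed
    also have "\<dots> \<le> e" by (rule r(2))
    finally show ?case .
  qed
  thus ?case by (simp add: I_def)
qed

end



lemma (in stab) C2_nonneg: "C2 \<ge> 0"
  unfolding C2_def using K1_nonneg K2_pos by simp

theorem mainTheorem13:
  fixes a \<delta> :: real
  assumes "1 < a" and "a \<le> 2" and "\<bar>\<delta>\<bar> \<le> 2 - a"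
  shows "(\<forall>t>0. ((\<lambda>\<epsilon>. \<integral>\<^sup>+ s\<in>{0..t}. (\<integral>\<^sup>+ x. ennreal ((stableR a \<delta> \<epsilon> s x - stableG a \<delta> s x)\<^sup>2) \<partial>lborel) \<partial>lborel)
              \<longlongrightarrow> 0) (at_right 0))
       \<and> (\<exists>C::real. C \<ge> 0 \<and> (\<forall>\<epsilon>>0. \<forall>t>0.
              (\<integral>\<^sup>+ x. ennreal ((stableR a \<delta> \<epsilon> t x)\<^sup>2) \<partial>lborel) \<le> ennreal (C * t powr (- 1 / a))))"
proof -
  interpret stab a \<delta> using assms by unfold_locales
  show ?thesis
  proof (intro conjI allI impI)
    fix t :: real assume "t > 0"
    thus "((\<lambda>\<epsilon>. \<integral>\<^sup>+ s\<in>{0..t}. (\<integral>\<^sup>+ x. ennreal ((stableR a \<delta> \<epsilon> s x - stableG a \<delta> s x)\<^sup>2) \<partial>lborel) \<partial>lborel)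
              \<longlongrightarrow> 0) (at_right 0)" by (rule part1)
  next
    show "\<exists>C::real. C \<ge> 0 \<and> (\<forall>\<epsilon>>0. \<forall>t>0.
              (\<integral>\<^sup>+ x. ennreal ((stableR a \<delta> \<epsilon> t x)\<^sup>2) \<partial>lborel) \<le> ennreal (C * t powr (- 1 / a)))"
      using C2_nonneg part2 by blast
  qed
qed

end
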